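(* Let $G$ be a finite group and $H\subset G$ a subgroup. Let $\xi$ be a pure state of a system carrying a projective unitary representation $U$ of $G$, which is a uniform state with symmetry $H$, i.e. $\chi_\xi(g)=1$ for $g\in H$ and $\chi_\xi(g)=0$ for $g\notin H$. Let $|\phi\rangle$ be any pure state of a system carrying a projective unitary representation $U'$ of $G$ with $H\subset\mathrm{Sym}_G(\phi)$. Then for every positive integer $M$ there exists a CPTP map $\Lambda$, covariant w.r.t. $U$ and $U'^{\otimes M}$, with $\Lambda(\xi)=\phi^{\otimes M}$.
   Context: $\chi_\xi(g)=\langle\xi|U(g)|\xi\rangle$; $\mathrm{Sym}_G(\phi)=\{g: U'(g)\phi U'(g)^\dagger=\phi\}$ with $\phi=|\phi\rangle\langle\phi|$. A projective unitary representation satisfies $U(g)U(g')=e^{i\omega(g,g')}U(gg')$. A CPTP map $\Lambda$ is covariant w.r.t. input representation $U$ and output representation $V$ if $V(g)\Lambda(X)V(g)^\dagger=\Lambda(U(g)XU(g)^\dagger)$ for all $g\in G$. *)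

theory Defs
  imports "HOL-Algebra.Group" "Jordan_Normal_Form.Matrix" "Jordan_Normal_Form.Conjugate"
begin

definition adj :: "complex mat \<Rightarrow> complex mat" where
  "adj A = mat (dim_col A) (dim_row A) (\<lambda>(i,j). cnj (A $$ (j,i)))"

definition ketbra :: "complex vec \<Rightarrow> complex mat" where
  "ketbra v = mat (dim_vec v) (dim_vec v) (\<lambda>(i,j). v $ i * cnj (v $ j))"

definition pure_state :: "nat \<Rightarrow> complex vec \<Rightarrow> bool" where
  "pure_state d v \<longleftrightarrow> v \<in> carrier_vec d \<and> v \<bullet>c v = 1"

definition unitary_mat :: "nat \<Rightarrow> complex mat \<Rightarrow> bool" where
  "unitary_mat d A \<longleftrightarrow> A \<in> carrier_mat d d \<and> adj A * A = 1\<^sub>m d"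

definition kron :: "complex mat \<Rightarrow> complex mat \<Rightarrow> complex mat" where
  "kron A B = mat (dim_row A * dim_row B) (dim_col A * dim_col B)
     (\<lambda>(i,j). A $$ (i div dim_row B, j div dim_col B) * B $$ (i mod dim_row B, j mod dim_col B))"

fun kron_pow :: "complex mat \<Rightarrow> nat \<Rightarrow> complex mat" where
  "kron_pow A 0 = 1\<^sub>m 1"
| "kron_pow A (Suc M) = kron A (kron_pow A M)"

definition proj_unitary_rep :: "('g, 'b) monoid_scheme \<Rightarrow> nat \<Rightarrow> ('g \<Rightarrow> complex mat) \<Rightarrow> bool" where
  "proj_unitary_rep G d U \<longleftrightarrow>
     (\<forall>g\<in>carrier G. unitary_mat d (U g)) \<and>
     (\<exists>\<omega> :: 'g \<Rightarrow> 'g \<Rightarrow> real. \<forall>g\<in>carrier G. \<forall>g'\<in>carrier G.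
        U g * U g' = exp (\<i> * complex_of_real (\<omega> g g')) \<cdot>\<^sub>m U (g \<otimes>\<^bsub>G\<^esub> g'))"

definition char_fun :: "('g \<Rightarrow> complex mat) \<Rightarrow> complex vec \<Rightarrow> 'g \<Rightarrow> complex" where
  "char_fun U \<xi> g = (U g *\<^sub>v \<xi>) \<bullet>c \<xi>"

definition Sym :: "('g, 'b) monoid_scheme \<Rightarrow> ('g \<Rightarrow> complex mat) \<Rightarrow> complex vec \<Rightarrow> 'g set" where
  "Sym G U \<phi> = {g \<in> carrier G. U g * ketbra \<phi> * adj (U g) = ketbra \<phi>}"

definition psd :: "nat \<Rightarrow> complex mat \<Rightarrow> bool" where
  "psd n A \<longleftrightarrow> A \<in> carrier_mat n n \<and>
     (\<forall>v\<in>carrier_vec n. Im ((A *\<^sub>v v) \<bullet>c v) = 0 \<and> Re ((A *\<^sub>v v) \<bullet>c v) \<ge> 0)"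

text \<open>(id_k \<otimes> Lambda) applied to a (k*n) x (k*n) matrix viewed as k x k blocks of
  n x n matrices; the output is (k*m) x (k*m).\<close>
definition block :: "nat \<Rightarrow> complex mat \<Rightarrow> nat \<Rightarrow> nat \<Rightarrow> complex mat" where
  "block n X a b = mat n n (\<lambda>(p,q). X $$ (a * n + p, b * n + q))"

definition id_tensor :: "nat \<Rightarrow> nat \<Rightarrow> nat \<Rightarrow> (complex mat \<Rightarrow> complex mat) \<Rightarrow> complex mat \<Rightarrow> complex mat" where
  "id_tensor k n m \<Lambda> X = mat (k * m) (k * m)
     (\<lambda>(i,j). \<Lambda> (block n X (i div m) (j div m)) $$ (i mod m, j mod m))"

definition linear_map :: "nat \<Rightarrow> nat \<Rightarrow> (complex mat \<Rightarrow> complex mat) \<Rightarrow> bool" where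
  "linear_map n m \<Lambda> \<longleftrightarrow>
     (\<forall>X\<in>carrier_mat n n. \<Lambda> X \<in> carrier_mat m m) \<and>
     (\<forall>X\<in>carrier_mat n n. \<forall>Y\<in>carrier_mat n n. \<Lambda> (X + Y) = \<Lambda> X + \<Lambda> Y) \<and>
     (\<forall>c. \<forall>X\<in>carrier_mat n n. \<Lambda> (c \<cdot>\<^sub>m X) = c \<cdot>\<^sub>m \<Lambda> X)"

definition completely_positive :: "nat \<Rightarrow> nat \<Rightarrow> (complex mat \<Rightarrow> complex mat) \<Rightarrow> bool" where
  "completely_positive n m \<Lambda> \<longleftrightarrow>
     (\<forall>k>0. \<forall>X. psd (k * n) X \<longrightarrow> psd (k * m) (id_tensor k n m \<Lambda> X))"

definition mtrace :: "complex mat \<Rightarrow> complex" where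
  "mtrace A = (\<Sum>i<dim_row A. A $$ (i,i))"

definition trace_preserving :: "nat \<Rightarrow> (complex mat \<Rightarrow> complex mat) \<Rightarrow> bool" where
  "trace_preserving n \<Lambda> \<longleftrightarrow> (\<forall>X\<in>carrier_mat n n. mtrace (\<Lambda> X) = mtrace X)"

definition CPTP :: "nat \<Rightarrow> nat \<Rightarrow> (complex mat \<Rightarrow> complex mat) \<Rightarrow> bool" where
  "CPTP n m \<Lambda> \<longleftrightarrow> linear_map n m \<Lambda> \<and> completely_positive n m \<Lambda> \<and> trace_preserving n \<Lambda>"

definition covariant :: "('g, 'b) monoid_scheme \<Rightarrow> nat \<Rightarrow> ('g \<Rightarrow> complex mat) \<Rightarrow> ('g \<Rightarrow> complex mat)
     \<Rightarrow> (complex mat \<Rightarrow> complex mat) \<Rightarrow> bool" where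
  "covariant G n U V \<Lambda> \<longleftrightarrow>
     (\<forall>g\<in>carrier G. \<forall>X\<in>carrier_mat n n. V g * \<Lambda> X * adj (V g) = \<Lambda> (U g * X * adj (U g)))"

end

theory Submission
  imports Defs "Jordan_Normal_Form.Determinant"
begin



lemma sum_split_mult:
  fixes f :: "nat \<Rightarrow> 'a::comm_monoid_add"
  shows "(\<Sum>i<k*m. f i) = (\<Sum>c<k. \<Sum>p<m. f (c*m+p))"
proof (induction k)
  case 0 then show ?case by simp
next
  case (Suc k)
  have e: "{..<Suc k * m} = {..<k*m} \<union> (\<lambda>p. k*m+p) ` {..<m}"
  proof (intro Set.set_eqI iffI)
    fix x assume x: "x \<in> {..<Suc k * m}"
    show "x \<in> {..<k*m} \<union> (\<lambda>p. k*m+p) ` {..<m}"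
    proof (cases "x < k*m")
      case False then show ?thesis using x by (intro UnI2 image_eqI[of _ _ "x - k*m"]) auto
    qed simp
  qed auto
  have "(\<Sum>i<Suc k*m. f i) = (\<Sum>i<k*m. f i) + (\<Sum>i\<in>(\<lambda>p. k*m+p) ` {..<m}. f i)"
    unfolding e by (rule sum.union_disjoint) auto
  also have "(\<Sum>i\<in>(\<lambda>p. k*m+p) ` {..<m}. f i) = (\<Sum>p<m. f (k*m+p))"
    by (subst sum.reindex) (auto simp: inj_on_def)
  finally show ?case using Suc by simp
qed

definition qf :: "complex vec \<Rightarrow> complex mat \<Rightarrow> complex" where
  "qf a Y = (Y *\<^sub>v a) \<bullet>c a"

lemma qf_expand:
  assumes "Y \<in> carrier_mat n n" "a \<in> carrier_vec n"
  shows "qf a Y = (\<Sum>s<n. \<Sum>s'<n. Y$$(s,s') * a$s' * cnj (a$s))"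
  using assms unfolding qf_def
  by (auto simp: scalar_prod_def atLeast0LessThan sum_distrib_right row_def)

definition chan :: "nat \<Rightarrow> 'j set \<Rightarrow> ('j \<Rightarrow> complex vec) \<Rightarrow> ('j \<Rightarrow> complex vec) \<Rightarrow> complex mat \<Rightarrow> complex mat" where
  "chan m J a b X = mat m m (\<lambda>(p,q). \<Sum>j\<in>J. qf (a j) X * (b j $ p * cnj (b j $ q)))"

lemma blk_carrier: "block n X a b \<in> carrier_mat n n" unfolding block_def by auto

lemma quad_expand:
  assumes "Z \<in> carrier_mat N N" "v \<in> carrier_vec N"
  shows "(Z *\<^sub>v v) \<bullet>c v = (\<Sum>i<N. \<Sum>l<N. Z$$(i,l) * v$l * cnj (v$i))"
  using qf_expand[OF assms] unfolding qf_def .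

lemma idx_lt[simp]: "c < k \<Longrightarrow> p < m \<Longrightarrow> c*m+p < k*(m::nat)"
proof -
  assume "c < k" "p < m"
  then have "c*m+p < (c+1)*m" by simp
  also have "\<dots> \<le> k*m" using \<open>c < k\<close> by (intro mult_right_mono) auto
  finally show ?thesis .
qed

lemma split_dm:
  fixes f :: "nat \<Rightarrow> nat \<Rightarrow> 'a::comm_monoid_add"
  assumes "0 < m"
  shows "(\<Sum>i<k*m. f (i div m) (i mod m)) = (\<Sum>c<k. \<Sum>p<m. f c p)"
  unfolding sum_split_mult by (rule sum.cong, simp, rule sum.cong) (use assms in auto)

lemma core:
  assumes X: "X \<in> carrier_mat (k*n) (k*n)" and a: "a \<in> carrier_vec n"
    and b: "b \<in> carrier_vec m" and v: "v \<in> carrier_vec (k*m)" and m: "0 < m" and n: "0 < n"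
  defines "\<beta> \<equiv> \<lambda>c. \<Sum>q<m. cnj (b$q) * v$(c*m+q)"
  defines "u \<equiv> vec (k*n) (\<lambda>i. a$(i mod n) * \<beta> (i div n))"
  shows "(\<Sum>i<k*m. \<Sum>l<k*m. qf a (block n X (i div m) (l div m)) * (b$(i mod m) * cnj (b$(l mod m))) * v$l * cnj(v$i))
     = (X *\<^sub>v u) \<bullet>c u"
proof -
  have vi: "\<And>i. v$i = v$((i div m)*m + i mod m)" by simp
  have "(\<Sum>i<k*m. \<Sum>l<k*m. qf a (block n X (i div m) (l div m)) * (b$(i mod m) * cnj (b$(l mod m))) * v$l * cnj(v$i))
     = (\<Sum>c<k. \<Sum>p<m. \<Sum>c'<k. \<Sum>q<m. qf a (block n X c c') * (b$p * cnj (b$q)) * v$(c'*m+q) * cnj(v$(c*m+p)))"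
    apply (subst vi)
    apply (subst (2) vi)
    apply (subst split_dm[OF m, where f="\<lambda>c p. \<Sum>l<k*m. qf a (block n X c (l div m)) * (b$p * cnj (b$(l mod m))) * v$((l div m)*m + l mod m) * cnj(v$(c*m+p))"])
    apply (rule sum.cong, simp, rule sum.cong, simp)
    apply (subst split_dm[OF m, where f="\<lambda>c' q. qf a (block n X _ c') * (b$_ * cnj (b$q)) * v$(c'*m+q) * cnj(v$(_*m+_))"])
    by simp
  also have "\<dots> = (\<Sum>c<k. \<Sum>c'<k. \<Sum>p<m. \<Sum>q<m. qf a (block n X c c') * (b$p * cnj (b$q)) * v$(c'*m+q) * cnj(v$(c*m+p)))"
    by (rule sum.cong, simp, rule sum.swap)
  also have "\<dots> = (\<Sum>c<k. \<Sum>c'<k. qf a (block n X c c') * \<beta> c' * cnj (\<beta> c))"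
  proof (rule sum.cong, simp, rule sum.cong, simp)
    fix c c'
    have "qf a (block n X c c') * \<beta> c' * cnj (\<beta> c) = (\<Sum>q<m. \<Sum>p<m. qf a (block n X c c') * (b$p * cnj (b$q)) * v$(c'*m+q) * cnj(v$(c*m+p)))"
      unfolding \<beta>_def by (simp add: cnj_sum sum_distrib_left sum_distrib_right mult_ac)
    also have "\<dots> = (\<Sum>p<m. \<Sum>q<m. qf a (block n X c c') * (b$p * cnj (b$q)) * v$(c'*m+q) * cnj(v$(c*m+p)))"
      by (rule sum.swap)
    finally show "(\<Sum>p<m. \<Sum>q<m. qf a (block n X c c') * (b$p * cnj (b$q)) * v$(c'*m+q) * cnj(v$(c*m+p)))
       = qf a (block n X c c') * \<beta> c' * cnj (\<beta> c)" by simp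
  qed
  also have "\<dots> = (X *\<^sub>v u) \<bullet>c u"
  proof -
    have u: "u \<in> carrier_vec (k*n)" unfolding u_def by simp
    have "(X *\<^sub>v u) \<bullet>c u = (\<Sum>i<k*n. \<Sum>l<k*n. X$$(i,l) * u$l * cnj (u$i))"
      by (rule quad_expand[OF X u])
    also have "\<dots> = (\<Sum>c<k. \<Sum>s<n. \<Sum>c'<k. \<Sum>s'<n. X$$(c*n+s,c'*n+s') * (a$s' * \<beta> c') * cnj (a$s * \<beta> c))"
      unfolding sum_split_mult
      by (rule sum.cong, simp, rule sum.cong, simp, rule sum.cong, simp, rule sum.cong, simp)
         (auto simp: u_def)
    also have "\<dots> = (\<Sum>c<k. \<Sum>c'<k. \<Sum>s<n. \<Sum>s'<n. X$$(c*n+s,c'*n+s') * (a$s' * \<beta> c') * cnj (a$s * \<beta> c))"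
      by (rule sum.cong, simp, rule sum.swap)
    also have "\<dots> = (\<Sum>c<k. \<Sum>c'<k. qf a (block n X c c') * \<beta> c' * cnj (\<beta> c))"
      apply (rule sum.cong, simp, rule sum.cong, simp)
      apply (subst qf_expand[OF blk_carrier a])
      by (simp add: block_def sum_distrib_left mult_ac)
    finally show ?thesis by simp
  qed
  finally show ?thesis .
qed

lemma chan_carrier[simp]: "chan m J a b X \<in> carrier_mat m m"
  unfolding chan_def by simp

lemma chan_cp:
  assumes J: "finite J" and ab: "\<And>j. j \<in> J \<Longrightarrow> a j \<in> carrier_vec n \<and> b j \<in> carrier_vec m"
    and m: "0 < m" and n: "0 < n"
  shows "completely_positive n m (chan m J a b)"
  unfolding completely_positive_def
proof (intro allI impI)
  fix k :: nat and X assume k: "0 < k" and X: "psd (k * n) X"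
  have Xc: "X \<in> carrier_mat (k*n) (k*n)" using X unfolding psd_def by auto
  define Z where "Z = id_tensor k n m (chan m J a b) X"
  have Zc: "Z \<in> carrier_mat (k*m) (k*m)" unfolding Z_def id_tensor_def by simp
  have Zij: "Z $$ (i,l) = (\<Sum>j\<in>J. qf (a j) (block n X (i div m) (l div m)) * (b j $ (i mod m) * cnj (b j $ (l mod m))))"
    if "i < k*m" "l < k*m" for i l
    using that m unfolding Z_def id_tensor_def chan_def by simp
  define u where "u = (\<lambda>j v. vec (k*n) (\<lambda>i. a j $(i mod n) * (\<lambda>c. \<Sum>q<m. cnj (b j $q) * v$(c*m+q)) (i div n)))"
  have main: "(Z *\<^sub>v v) \<bullet>c v = (\<Sum>j\<in>J. (X *\<^sub>v u j v) \<bullet>c u j v)" if v: "v \<in> carrier_vec (k*m)" for v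
  proof -
    have "(Z *\<^sub>v v) \<bullet>c v = (\<Sum>i<k*m. \<Sum>l<k*m. Z$$(i,l) * v$l * cnj (v$i))"
      by (rule quad_expand[OF Zc v])
    also have "\<dots> = (\<Sum>i<k*m. \<Sum>l<k*m. \<Sum>j\<in>J. qf (a j) (block n X (i div m) (l div m)) * (b j $ (i mod m) * cnj (b j $ (l mod m))) * v$l * cnj (v$i))"
      by (rule sum.cong, simp, rule sum.cong, simp) (simp add: Zij sum_distrib_right)
    also have "\<dots> = (\<Sum>i<k*m. \<Sum>j\<in>J. \<Sum>l<k*m. qf (a j) (block n X (i div m) (l div m)) * (b j $ (i mod m) * cnj (b j $ (l mod m))) * v$l * cnj (v$i))"
      by (rule sum.cong, simp, rule sum.swap)
    also have "\<dots> = (\<Sum>j\<in>J. \<Sum>i<k*m. \<Sum>l<k*m. qf (a j) (block n X (i div m) (l div m)) * (b j $ (i mod m) * cnj (b j $ (l mod m))) * v$l * cnj (v$i))"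
      by (rule sum.swap)
    also have "\<dots> = (\<Sum>j\<in>J. (X *\<^sub>v u j v) \<bullet>c u j v)"
      by (rule sum.cong, simp, unfold u_def, rule core[OF Xc _ _ v m n]) (use ab in auto)
    finally show ?thesis .
  qed
  have pos: "Im ((X *\<^sub>v u j v) \<bullet>c u j v) = 0 \<and> Re ((X *\<^sub>v u j v) \<bullet>c u j v) \<ge> 0" for j v
    using X unfolding psd_def u_def by auto
  show "psd (k * m) (id_tensor k n m (chan m J a b) X)"
    unfolding psd_def Z_def[symmetric]
    using Zc by (auto simp: main Im_sum Re_sum pos intro: sum_nonneg)
qed

lemma adj_carrier[simp]: "A \<in> carrier_mat r c \<Longrightarrow> adj A \<in> carrier_mat c r"
  unfolding adj_def by auto

lemma adj_index[simp]: "i < dim_col A \<Longrightarrow> j < dim_row A \<Longrightarrow> adj A $$ (i,j) = cnj (A $$ (j,i))"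
  unfolding adj_def by auto

lemma adj_dims[simp]: "dim_row (adj A) = dim_col A" "dim_col (adj A) = dim_row A"
  unfolding adj_def by auto

lemma sprod_conj_expand:
  assumes "x \<in> carrier_vec n" "y \<in> carrier_vec n"
  shows "x \<bullet>c y = (\<Sum>i<n. x$i * cnj (y$i))"
  using assms by (auto simp: scalar_prod_def atLeast0LessThan)

lemma adjoint_prop:
  assumes A: "A \<in> carrier_mat r c" and x: "x \<in> carrier_vec c" and y: "y \<in> carrier_vec r"
  shows "(A *\<^sub>v x) \<bullet>c y = x \<bullet>c (adj A *\<^sub>v y)"
proof -
  have "(A *\<^sub>v x) \<bullet>c y = (\<Sum>i<r. \<Sum>j<c. A$$(i,j) * x$j * cnj (y$i))"
    using assms by (subst sprod_conj_expand[of _ r]) (auto simp: scalar_prod_def atLeast0LessThan sum_distrib_right)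
  also have "\<dots> = (\<Sum>j<c. \<Sum>i<r. A$$(i,j) * x$j * cnj (y$i))" by (rule sum.swap)
  also have "\<dots> = x \<bullet>c (adj A *\<^sub>v y)"
    using assms mult_mat_vec_carrier[OF adj_carrier[OF A] y] by (subst sprod_conj_expand[of _ c]) (auto simp: scalar_prod_def atLeast0LessThan sum_distrib_left cnj_sum mult_ac)
  finally show ?thesis .
qed

lemma unitary_sprod:
  assumes A: "A \<in> carrier_mat n n" and AA: "adj A * A = 1\<^sub>m n" and x: "x \<in> carrier_vec n" and y: "y \<in> carrier_vec n"
  shows "(A *\<^sub>v x) \<bullet>c (A *\<^sub>v y) = x \<bullet>c y"
proof -
  have "(A *\<^sub>v x) \<bullet>c (A *\<^sub>v y) = x \<bullet>c (adj A *\<^sub>v (A *\<^sub>v y))"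
    using assms by (intro adjoint_prop) auto
  also have "adj A *\<^sub>v (A *\<^sub>v y) = (adj A * A) *\<^sub>v y"
    by (rule assoc_mult_mat_vec[symmetric, of _ n n _ n]) (use assms in auto)
  also have "\<dots> = y" using AA y by simp
  finally show ?thesis .
qed

lemma qf_conj:
  assumes A: "A \<in> carrier_mat n n" and X: "X \<in> carrier_mat n n" and a: "a \<in> carrier_vec n"
  shows "qf a (A * X * adj A) = qf (adj A *\<^sub>v a) X"
proof -
  have "(A * X * adj A) *\<^sub>v a = A *\<^sub>v (X *\<^sub>v (adj A *\<^sub>v a))"
  proof -
    have "(A * X * adj A) *\<^sub>v a = (A * X) *\<^sub>v (adj A *\<^sub>v a)"
      by (rule assoc_mult_mat_vec[of _ n n _ n]) (use assms in auto)
    also have "\<dots> = A *\<^sub>v (X *\<^sub>v (adj A *\<^sub>v a))"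
      by (rule assoc_mult_mat_vec[of _ n n _ n]) (use assms mult_mat_vec_carrier[OF adj_carrier[OF A] a] in auto)
    finally show ?thesis .
  qed
  then show ?thesis unfolding qf_def using assms mult_mat_vec_carrier[OF adj_carrier[OF A] a]
    by (simp add: adjoint_prop[of A n n])
qed

lemma qf_smult:
  assumes X: "X \<in> carrier_mat n n" and a: "a \<in> carrier_vec n"
  shows "qf (c \<cdot>\<^sub>v a) X = complex_of_real ((cmod c)^2) * qf a X"
proof -
  have "complex_of_real ((cmod c)^2) = c * cnj c" using complex_norm_square[of c] by simp
  then show ?thesis using assms unfolding qf_expand[OF X a] qf_expand[OF X smult_carrier_vec[THEN iffD2, OF a]]
    by (simp add: sum_distrib_left mult_ac)
qed

lemma qf_add:
  assumes X: "X \<in> carrier_mat n n" and Y: "Y \<in> carrier_mat n n" and a: "a \<in> carrier_vec n"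
  shows "qf a (X + Y) = qf a X + qf a Y"
proof -
  have XY: "X + Y \<in> carrier_mat n n" using X Y by simp
  show ?thesis
  using assms unfolding qf_expand[OF X a] qf_expand[OF Y a] qf_expand[OF XY a]
  by (simp add: sum.distrib distrib_right)
qed

lemma qf_smult_mat:
  assumes X: "X \<in> carrier_mat n n" and a: "a \<in> carrier_vec n"
  shows "qf a (c \<cdot>\<^sub>m X) = c * qf a X"
  using assms unfolding qf_expand[OF X a] qf_expand[OF smult_carrier_mat[OF X] a]
  by (simp add: sum_distrib_left mult_ac)

lemma chan_linear:
  assumes a: "\<And>j. j \<in> J \<Longrightarrow> a j \<in> carrier_vec n"
  shows "linear_map n m (chan m J a b)"
  unfolding linear_map_def
proof (intro conjI ballI allI)
  fix X Y :: "complex mat" assume X: "X \<in> carrier_mat n n" and Y: "Y \<in> carrier_mat n n"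
  show "chan m J a b (X + Y) = chan m J a b X + chan m J a b Y"
    by (rule eq_matI) (auto simp: chan_def qf_add[OF X Y a] sum.distrib distrib_right)
next
  fix c and X :: "complex mat" assume X: "X \<in> carrier_mat n n"
  show "chan m J a b (c \<cdot>\<^sub>m X) = c \<cdot>\<^sub>m chan m J a b X"
    by (rule eq_matI) (auto simp: chan_def qf_smult_mat[OF X a] sum_distrib_left mult_ac)
qed simp

lemma chan_trace:
  assumes b: "\<And>j. j \<in> J \<Longrightarrow> b j \<in> carrier_vec m \<and> b j \<bullet>c b j = 1"
  shows "mtrace (chan m J a b X) = (\<Sum>j\<in>J. qf (a j) X)"
proof -
  have "mtrace (chan m J a b X) = (\<Sum>p<m. \<Sum>j\<in>J. qf (a j) X * (b j $ p * cnj (b j $ p)))"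
    unfolding mtrace_def chan_def by simp
  also have "\<dots> = (\<Sum>j\<in>J. qf (a j) X * (\<Sum>p<m. b j $ p * cnj (b j $ p)))"
    by (subst sum.swap) (simp add: sum_distrib_left)
  also have "\<dots> = (\<Sum>j\<in>J. qf (a j) X)"
  proof (rule sum.cong, simp)
    fix j assume j: "j \<in> J"
    have "(\<Sum>p<m. b j $ p * cnj (b j $ p)) = 1" using b[OF j] sprod_conj_expand[of "b j" m "b j"] by simp
    then show "qf (a j) X * (\<Sum>p<m. b j $ p * cnj (b j $ p)) = qf (a j) X" by simp
  qed
  finally show ?thesis .
qed

lemma conj_ketsum:
  assumes A: "A \<in> carrier_mat m m" and b: "\<And>j. j \<in> J \<Longrightarrow> b j \<in> carrier_vec m"
  shows "A * mat m m (\<lambda>(p,q). \<Sum>j\<in>J. c j * (b j $ p * cnj (b j $ q))) * adj A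
       = mat m m (\<lambda>(p,q). \<Sum>j\<in>J. c j * ((A *\<^sub>v b j) $ p * cnj ((A *\<^sub>v b j) $ q)))"
proof (rule eq_matI)
  fix p q assume p: "p < dim_row (mat m m (\<lambda>(p,q). \<Sum>j\<in>J. c j * ((A *\<^sub>v b j) $ p * cnj ((A *\<^sub>v b j) $ q))))"
    and q: "q < dim_col (mat m m (\<lambda>(p,q). \<Sum>j\<in>J. c j * ((A *\<^sub>v b j) $ p * cnj ((A *\<^sub>v b j) $ q))))"
  have p': "p < m" and q': "q < m" using p q by auto
  have "(A * mat m m (\<lambda>(p,q). \<Sum>j\<in>J. c j * (b j $ p * cnj (b j $ q))) * adj A) $$ (p,q)
     = (\<Sum>y<m. (\<Sum>x<m. A$$(p,x) * (\<Sum>j\<in>J. c j * (b j $ x * cnj (b j $ y)))) * cnj (A$$(q,y)))"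
    using A p' q' by (auto simp: scalar_prod_def atLeast0LessThan row_def col_def)
  also have "\<dots> = (\<Sum>y<m. \<Sum>x<m. \<Sum>j\<in>J. c j * (A$$(p,x) * b j $ x) * (cnj (A$$(q,y)) * cnj (b j $ y)))"
    by (simp add: sum_distrib_left sum_distrib_right mult_ac)
  also have "\<dots> = (\<Sum>y<m. \<Sum>j\<in>J. \<Sum>x<m. c j * (A$$(p,x) * b j $ x) * (cnj (A$$(q,y)) * cnj (b j $ y)))"
    by (rule sum.cong, simp, rule sum.swap)
  also have "\<dots> = (\<Sum>j\<in>J. \<Sum>y<m. \<Sum>x<m. c j * (A$$(p,x) * b j $ x) * (cnj (A$$(q,y)) * cnj (b j $ y)))"
    by (rule sum.swap)
  also have "\<dots> = (\<Sum>j\<in>J. c j * ((\<Sum>x<m. A$$(p,x) * b j $ x) * cnj (\<Sum>y<m. A$$(q,y) * b j $ y)))"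
    by (simp add: sum_distrib_left sum_distrib_right cnj_sum mult_ac)
  also have "\<dots> = (\<Sum>j\<in>J. c j * ((A *\<^sub>v b j) $ p * cnj ((A *\<^sub>v b j) $ q)))"
  proof (rule sum.cong, simp)
    fix j assume j: "j \<in> J"
    have d: "dim_vec (b j) = m" using b[OF j] by auto
    show "c j * ((\<Sum>x<m. A$$(p,x) * b j $ x) * cnj (\<Sum>y<m. A$$(q,y) * b j $ y)) = c j * ((A *\<^sub>v b j) $ p * cnj ((A *\<^sub>v b j) $ q))"
      using A p' q' d by (simp add: scalar_prod_def atLeast0LessThan row_def)
  qed
  finally show "(A * mat m m (\<lambda>(p,q). \<Sum>j\<in>J. c j * (b j $ p * cnj (b j $ q))) * adj A) $$ (p,q)
     = mat m m (\<lambda>(p,q). \<Sum>j\<in>J. c j * ((A *\<^sub>v b j) $ p * cnj ((A *\<^sub>v b j) $ q))) $$ (p,q)"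
    using p' q' by simp
qed (use A in auto)

lemma phase_ket:
  assumes "cmod e = 1" "p < dim_vec x" "q < dim_vec x"
  shows "(e \<cdot>\<^sub>v x) $ p * cnj ((e \<cdot>\<^sub>v x) $ q) = x $ p * cnj (x $ q)"
proof -
  have "e * cnj e = 1" using assms(1) complex_norm_square[of e] by simp
  then have "(e \<cdot>\<^sub>v x) $ p * cnj ((e \<cdot>\<^sub>v x) $ q) = (e * cnj e) * (x $ p * cnj (x $ q))"
    using assms by (simp add: mult_ac)
  then show ?thesis using \<open>e * cnj e = 1\<close> by simp
qed

lemma bij_left_mult:
  assumes grp: "group G" and h: "h \<in> carrier G"
  shows "bij_betw (\<lambda>(g,t). (h \<otimes>\<^bsub>G\<^esub> g, t)) (carrier G \<times> T) (carrier G \<times> T)"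
proof -
  interpret group G by (rule grp)
  show ?thesis
  proof (rule bij_betwI[where g="\<lambda>(g,t). (inv\<^bsub>G\<^esub> h \<otimes>\<^bsub>G\<^esub> g, t)"])
    show "(\<lambda>(g,t). (h \<otimes>\<^bsub>G\<^esub> g, t)) \<in> carrier G \<times> T \<rightarrow> carrier G \<times> T" using h by auto
    show "(\<lambda>(g,t). (inv\<^bsub>G\<^esub> h \<otimes>\<^bsub>G\<^esub> g, t)) \<in> carrier G \<times> T \<rightarrow> carrier G \<times> T" using h by auto
    show "(case case x of (g, t) \<Rightarrow> (h \<otimes>\<^bsub>G\<^esub> g, t) of (g, t) \<Rightarrow> (inv\<^bsub>G\<^esub> h \<otimes>\<^bsub>G\<^esub> g, t)) = x" if "x \<in> carrier G \<times> T" for x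
      using that h by (auto simp: m_assoc[symmetric])
    show "(case case y of (g, t) \<Rightarrow> (inv\<^bsub>G\<^esub> h \<otimes>\<^bsub>G\<^esub> g, t) of (g, t) \<Rightarrow> (h \<otimes>\<^bsub>G\<^esub> g, t)) = y" if "y \<in> carrier G \<times> T" for y
      using that h by (auto simp: m_assoc[symmetric])
  qed
qed

lemma chan_cov:
  assumes grp: "group G" and h: "h \<in> carrier G"
   and Uc: "\<And>g. g \<in> carrier G \<Longrightarrow> U g \<in> carrier_mat n n"
   and Vc: "\<And>g. g \<in> carrier G \<Longrightarrow> V g \<in> carrier_mat m m"
   and \<alpha>: "\<And>t. t \<in> T \<Longrightarrow> \<alpha> t \<in> carrier_vec n" and w: "w \<in> carrier_vec m"
   and X: "X \<in> carrier_mat n n"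
   and pU: "\<And>g t. g \<in> carrier G \<Longrightarrow> t \<in> T \<Longrightarrow> \<exists>e. cmod e = 1 \<and> adj (U h) *\<^sub>v (U g *\<^sub>v \<alpha> t) = e \<cdot>\<^sub>v (U (inv\<^bsub>G\<^esub> h \<otimes>\<^bsub>G\<^esub> g) *\<^sub>v \<alpha> t)"
   and pV: "\<And>g. g \<in> carrier G \<Longrightarrow> \<exists>e. cmod e = 1 \<and> V h *\<^sub>v (V g *\<^sub>v w) = e \<cdot>\<^sub>v (V (h \<otimes>\<^bsub>G\<^esub> g) *\<^sub>v w)"
  shows "V h * chan m (carrier G \<times> T) (\<lambda>(g,t). U g *\<^sub>v \<alpha> t) (\<lambda>(g,t). V g *\<^sub>v w) X * adj (V h)
       = chan m (carrier G \<times> T) (\<lambda>(g,t). U g *\<^sub>v \<alpha> t) (\<lambda>(g,t). V g *\<^sub>v w) (U h * X * adj (U h))"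
proof -
  interpret group G by (rule grp)
  let ?J = "carrier G \<times> T"
  define F where "F = (\<lambda>g1 g2 t p q. qf (U g1 *\<^sub>v \<alpha> t) X * ((V g2 *\<^sub>v w) $ p * cnj ((V g2 *\<^sub>v w) $ q)))"
  have "V h * chan m ?J (\<lambda>(g,t). U g *\<^sub>v \<alpha> t) (\<lambda>(g,t). V g *\<^sub>v w) X * adj (V h)
      = mat m m (\<lambda>(p,q). \<Sum>j\<in>?J. qf ((\<lambda>(g,t). U g *\<^sub>v \<alpha> t) j) X * ((V h *\<^sub>v (\<lambda>(g,t). V g *\<^sub>v w) j) $ p * cnj ((V h *\<^sub>v (\<lambda>(g,t). V g *\<^sub>v w) j) $ q)))"
    unfolding chan_def
    by (rule conj_ketsum[OF Vc[OF h]]) (use Vc w in \<open>auto intro!: mult_mat_vec_carrier\<close>)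
  also have "\<dots> = mat m m (\<lambda>(p,q). \<Sum>(g,t)\<in>?J. F g (h \<otimes>\<^bsub>G\<^esub> g) t p q)"
  proof (rule eq_matI; simp; rule sum.cong; clarsimp)
    fix p q g t assume p: "p < m" and q: "q < m" and g: "g \<in> carrier G" and t: "t \<in> T"
    obtain e where e: "cmod e = 1" "V h *\<^sub>v (V g *\<^sub>v w) = e \<cdot>\<^sub>v (V (h \<otimes>\<^bsub>G\<^esub> g) *\<^sub>v w)" using pV[OF g] by blast
    have d: "dim_vec (V (h \<otimes>\<^bsub>G\<^esub> g) *\<^sub>v w) = m" using Vc[of "h \<otimes>\<^bsub>G\<^esub> g"] g h by auto
    show "qf (U g *\<^sub>v \<alpha> t) X * ((V h *\<^sub>v (V g *\<^sub>v w)) $ p * cnj ((V h *\<^sub>v (V g *\<^sub>v w)) $ q)) = F g (h \<otimes>\<^bsub>G\<^esub> g) t p q"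
    proof -
      have ph: "(e \<cdot>\<^sub>v (V (h \<otimes>\<^bsub>G\<^esub> g) *\<^sub>v w)) $ p * cnj ((e \<cdot>\<^sub>v (V (h \<otimes>\<^bsub>G\<^esub> g) *\<^sub>v w)) $ q) = (V (h \<otimes>\<^bsub>G\<^esub> g) *\<^sub>v w) $ p * cnj ((V (h \<otimes>\<^bsub>G\<^esub> g) *\<^sub>v w) $ q)"
        by (rule phase_ket[OF e(1)]) (use d p q in auto)
      show ?thesis by (simp only: F_def e(2) ph)
    qed
  qed
  also have "\<dots> = mat m m (\<lambda>(p,q). \<Sum>(g,t)\<in>?J. F (inv\<^bsub>G\<^esub> h \<otimes>\<^bsub>G\<^esub> g) g t p q)"
  proof (rule eq_matI; simp)
    fix p q
    have "(\<Sum>(g,t)\<in>?J. F (inv\<^bsub>G\<^esub> h \<otimes>\<^bsub>G\<^esub> g) g t p q) = (\<Sum>x\<in>?J. (\<lambda>(g,t). F (inv\<^bsub>G\<^esub> h \<otimes>\<^bsub>G\<^esub> g) g t p q) ((\<lambda>(g,t). (h \<otimes>\<^bsub>G\<^esub> g, t)) x))"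
      by (rule sum.reindex_bij_betw[symmetric, OF bij_left_mult[OF grp h]])
    also have "\<dots> = (\<Sum>(g,t)\<in>?J. F g (h \<otimes>\<^bsub>G\<^esub> g) t p q)"
      by (rule sum.cong) (use h in \<open>auto simp: m_assoc[symmetric]\<close>)
    finally show "(\<Sum>(g,t)\<in>?J. F g (h \<otimes>\<^bsub>G\<^esub> g) t p q) = (\<Sum>(g,t)\<in>?J. F (inv\<^bsub>G\<^esub> h \<otimes>\<^bsub>G\<^esub> g) g t p q)" by simp
  qed
  also have "\<dots> = chan m ?J (\<lambda>(g,t). U g *\<^sub>v \<alpha> t) (\<lambda>(g,t). V g *\<^sub>v w) (U h * X * adj (U h))"
    unfolding chan_def
  proof (rule eq_matI; simp; rule sum.cong; clarsimp)
    fix p q g t assume p: "p < m" and q: "q < m" and g: "g \<in> carrier G" and t: "t \<in> T"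
    obtain e where e: "cmod e = 1" "adj (U h) *\<^sub>v (U g *\<^sub>v \<alpha> t) = e \<cdot>\<^sub>v (U (inv\<^bsub>G\<^esub> h \<otimes>\<^bsub>G\<^esub> g) *\<^sub>v \<alpha> t)" using pU[OF g t] by blast
    have c1: "U (inv\<^bsub>G\<^esub> h \<otimes>\<^bsub>G\<^esub> g) *\<^sub>v \<alpha> t \<in> carrier_vec n" using Uc[of "inv\<^bsub>G\<^esub> h \<otimes>\<^bsub>G\<^esub> g"] g h \<alpha>[OF t] by auto
    have "qf (U g *\<^sub>v \<alpha> t) (U h * X * adj (U h)) = qf (adj (U h) *\<^sub>v (U g *\<^sub>v \<alpha> t)) X"
      by (rule qf_conj[OF Uc[OF h] X]) (use Uc[OF g] \<alpha>[OF t] in auto)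
    also have "\<dots> = qf (U (inv\<^bsub>G\<^esub> h \<otimes>\<^bsub>G\<^esub> g) *\<^sub>v \<alpha> t) X"
      unfolding e(2) qf_smult[OF X c1] e(1) by simp
    finally show "F (inv\<^bsub>G\<^esub> h \<otimes>\<^bsub>G\<^esub> g) g t p q = qf (U g *\<^sub>v \<alpha> t) (U h * X * adj (U h)) * ((V g *\<^sub>v w) $ p * cnj ((V g *\<^sub>v w) $ q))"
      unfolding F_def by simp
  qed
  finally show ?thesis .
qed




definition kronv :: "complex vec \<Rightarrow> complex vec \<Rightarrow> complex vec" where
  "kronv x y = vec (dim_vec x * dim_vec y) (\<lambda>i. x $ (i div dim_vec y) * y $ (i mod dim_vec y))"

fun vpow :: "complex vec \<Rightarrow> nat \<Rightarrow> complex vec" where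
  "vpow x 0 = vec 1 (\<lambda>_. 1)"
| "vpow x (Suc M) = kronv x (vpow x M)"

lemma dim_kronv[simp]: "dim_vec (kronv x y) = dim_vec x * dim_vec y"
  unfolding kronv_def by simp

lemma dim_vpow[simp]: "dim_vec (vpow x M) = dim_vec x ^ M"
  by (induction M) auto

lemma kron_carrier: "A \<in> carrier_mat r1 c1 \<Longrightarrow> B \<in> carrier_mat r2 c2 \<Longrightarrow> kron A B \<in> carrier_mat (r1*r2) (c1*c2)"
  unfolding kron_def carrier_mat_def by simp

lemma kron_pow_carrier: "A \<in> carrier_mat r c \<Longrightarrow> kron_pow A M \<in> carrier_mat (r^M) (c^M)"
proof (induction M)
  case 0 then show ?case by simp
next
  case (Suc M) then show ?case using kron_carrier[OF \<open>A \<in> carrier_mat r c\<close> Suc.IH] by simp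
qed

lemma div_lt_of_lt: "i < r1 * (r2::nat) \<Longrightarrow> i div r2 < r1"
  by (simp add: less_mult_imp_div_less)

lemma mod_lt_of_lt: "i < r1 * (r2::nat) \<Longrightarrow> i mod r2 < r2"
  by (cases "r2 = 0") auto

lemma kron_mult_vec:
  assumes A: "A \<in> carrier_mat r1 c1" and B: "B \<in> carrier_mat r2 c2"
    and x: "x \<in> carrier_vec c1" and y: "y \<in> carrier_vec c2" and c2: "0 < c2"
  shows "kron A B *\<^sub>v kronv x y = kronv (A *\<^sub>v x) (B *\<^sub>v y)"
proof (rule eq_vecI)
  show "dim_vec (kron A B *\<^sub>v kronv x y) = dim_vec (kronv (A *\<^sub>v x) (B *\<^sub>v y))"
    using A B unfolding kron_def by auto
  fix i assume "i < dim_vec (kronv (A *\<^sub>v x) (B *\<^sub>v y))"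
  then have i: "i < r1 * r2" using A B by auto
  have i1: "i div r2 < r1" and i2: "i mod r2 < r2" using div_lt_of_lt[OF i] mod_lt_of_lt[OF i] by auto
  have "(kron A B *\<^sub>v kronv x y) $ i = (\<Sum>l<c1*c2. A $$ (i div r2, l div c2) * B $$ (i mod r2, l mod c2) * (x $ (l div c2) * y $ (l mod c2)))"
    using A B x y i unfolding kron_def kronv_def
    by (auto simp: scalar_prod_def atLeast0LessThan row_def intro!: sum.cong)
  also have "\<dots> = (\<Sum>c<c1. \<Sum>p<c2. A $$ (i div r2, c) * B $$ (i mod r2, p) * (x $ c * y $ p))"
    by (rule split_dm[OF c2, where f="\<lambda>c p. A $$ (i div r2, c) * B $$ (i mod r2, p) * (x $ c * y $ p)"])
  also have "\<dots> = (\<Sum>c<c1. A $$ (i div r2, c) * x $ c) * (\<Sum>p<c2. B $$ (i mod r2, p) * y $ p)"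
    by (simp add: sum_product mult_ac)
  also have "\<dots> = kronv (A *\<^sub>v x) (B *\<^sub>v y) $ i"
    using A B x y i i1 i2 unfolding kronv_def
    by (auto simp: scalar_prod_def atLeast0LessThan row_def)
  finally show "(kron A B *\<^sub>v kronv x y) $ i = kronv (A *\<^sub>v x) (B *\<^sub>v y) $ i" .
qed

lemma vpow_carrier: "x \<in> carrier_vec d \<Longrightarrow> vpow x M \<in> carrier_vec (d^M)"
  by (intro carrier_vecI) auto

lemma kron_pow_vpow:
  assumes A: "A \<in> carrier_mat d d" and x: "x \<in> carrier_vec d" and d: "0 < d"
  shows "kron_pow A M *\<^sub>v vpow x M = vpow (A *\<^sub>v x) M"
proof (induction M)
  case 0 then show ?case by (simp add: one_mult_mat_vec[of _ 1])
next
  case (Suc M)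
  have "kron_pow A (Suc M) *\<^sub>v vpow x (Suc M) = kron A (kron_pow A M) *\<^sub>v kronv x (vpow x M)" by simp
  also have "\<dots> = kronv (A *\<^sub>v x) (kron_pow A M *\<^sub>v vpow x M)"
    by (rule kron_mult_vec[OF A kron_pow_carrier[OF A] x vpow_carrier[OF x]]) (use d in simp)
  finally show ?case using Suc by simp
qed

lemma kronv_norm:
  assumes "0 < dim_vec y"
  shows "kronv x y \<bullet>c kronv x y = (x \<bullet>c x) * (y \<bullet>c y)"
proof -
  have c: "kronv x y \<in> carrier_vec (dim_vec x * dim_vec y)" by (rule carrier_vecI) simp
  have "kronv x y \<bullet>c kronv x y = (\<Sum>i<dim_vec x * dim_vec y. kronv x y $ i * cnj (kronv x y $ i))"
    by (rule sprod_conj_expand[OF c c])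
  also have "\<dots> = (\<Sum>i<dim_vec x * dim_vec y. (x $ (i div dim_vec y) * cnj (x $ (i div dim_vec y))) * (y $ (i mod dim_vec y) * cnj (y $ (i mod dim_vec y))))"
  proof (rule sum.cong)
    fix i assume "i \<in> {..<dim_vec x * dim_vec y}"
    then have "kronv x y $ i = x $ (i div dim_vec y) * y $ (i mod dim_vec y)" unfolding kronv_def by simp
    then show "kronv x y $ i * cnj (kronv x y $ i) = (x $ (i div dim_vec y) * cnj (x $ (i div dim_vec y))) * (y $ (i mod dim_vec y) * cnj (y $ (i mod dim_vec y)))"
      by (simp add: ac_simps)
  qed simp
  also have "\<dots> = (\<Sum>c<dim_vec x. \<Sum>p<dim_vec y. (x $ c * cnj (x $ c)) * (y $ p * cnj (y $ p)))"
    by (rule split_dm[OF assms, where f="\<lambda>c p. (x $ c * cnj (x $ c)) * (y $ p * cnj (y $ p))"])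
  also have "\<dots> = (\<Sum>c<dim_vec x. x $ c * cnj (x $ c)) * (\<Sum>p<dim_vec y. y $ p * cnj (y $ p))"
    by (rule sum_product[symmetric])
  also have "\<dots> = (x \<bullet>c x) * (y \<bullet>c y)"
  proof -
    have x: "x \<in> carrier_vec (dim_vec x)" and y: "y \<in> carrier_vec (dim_vec y)" by (auto intro: carrier_vecI)
    show ?thesis unfolding sprod_conj_expand[OF x x] sprod_conj_expand[OF y y] ..
  qed
  finally show ?thesis .
qed


lemma vpow_norm:
  assumes "x \<bullet>c x = 1" "0 < dim_vec x"
  shows "vpow x M \<bullet>c vpow x M = 1"
proof (induction M)
  case 0 then show ?case by (simp add: scalar_prod_def)
next
  case (Suc M) then show ?case using assms by (simp add: kronv_norm)
qed

lemma kronv_smult: "kronv (a \<cdot>\<^sub>v x) (b \<cdot>\<^sub>v y) = (a * b) \<cdot>\<^sub>v kronv x y"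
proof (rule eq_vecI)
  fix i assume "i < dim_vec ((a * b) \<cdot>\<^sub>v kronv x y)"
  then have i: "i < dim_vec x * dim_vec y" by simp
  have "i div dim_vec y < dim_vec x" "i mod dim_vec y < dim_vec y"
    using div_lt_of_lt[OF i] mod_lt_of_lt[OF i] by auto
  then show "kronv (a \<cdot>\<^sub>v x) (b \<cdot>\<^sub>v y) $ i = ((a * b) \<cdot>\<^sub>v kronv x y) $ i"
    using i unfolding kronv_def by simp
qed simp

lemma vpow_smult: "vpow (c \<cdot>\<^sub>v x) M = c^M \<cdot>\<^sub>v vpow x M"
proof (induction M)
  case 0 then show ?case by (auto intro!: eq_vecI)
next
  case (Suc M)
  have "vpow (c \<cdot>\<^sub>v x) (Suc M) = kronv (c \<cdot>\<^sub>v x) (c^M \<cdot>\<^sub>v vpow x M)" using Suc by simp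
  also have "\<dots> = (c * c^M) \<cdot>\<^sub>v kronv x (vpow x M)" by (rule kronv_smult)
  finally show ?case by simp
qed

lemma ketbra_kronv: "0 < dim_vec y \<Longrightarrow> ketbra (kronv x y) = kron (ketbra x) (ketbra y)"
  unfolding ketbra_def kron_def kronv_def
  by (rule eq_matI) (simp_all add: div_lt_of_lt mod_lt_of_lt mult_ac)

lemma ketbra_vpow: "0 < dim_vec x \<Longrightarrow> ketbra (vpow x M) = kron_pow (ketbra x) M"
proof (induction M)
  case 0 then show ?case by (auto simp: ketbra_def intro!: eq_matI)
next
  case (Suc M) then show ?case by (simp add: ketbra_kronv)
qed




lemma cmod_exp_i: "cmod (exp (\<i> * complex_of_real r)) = 1"
  by (simp add: cis_conv_exp[symmetric])

lemma smult_mat_mult_vec: "A \<in> carrier_mat nr nc \<Longrightarrow> v \<in> carrier_vec nc \<Longrightarrow> (k \<cdot>\<^sub>m A) *\<^sub>v v = k \<cdot>\<^sub>v (A *\<^sub>v v)"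
  by (rule eq_vecI) (auto simp: scalar_prod_def sum_distrib_left mult_ac)

lemma sprod_conj_smult:
  assumes x: "x \<in> carrier_vec n" and y: "y \<in> carrier_vec n"
  shows "(a \<cdot>\<^sub>v x) \<bullet>c (b \<cdot>\<^sub>v y) = a * cnj b * (x \<bullet>c y)"
proof -
  have x': "a \<cdot>\<^sub>v x \<in> carrier_vec n" and y': "b \<cdot>\<^sub>v y \<in> carrier_vec n" using x y by auto
  show ?thesis unfolding sprod_conj_expand[OF x' y'] sprod_conj_expand[OF x y]
    using x y by (simp add: sum_distrib_left mult_ac)
qed

lemma unit_eq:
  fixes x y :: "complex vec"
  assumes x: "x \<in> carrier_vec n" and y: "y \<in> carrier_vec n"
    and xx: "x \<bullet>c x = 1" and yy: "y \<bullet>c y = 1" and xy: "x \<bullet>c y = 1"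
  shows "x = y"
proof -
  have sx: "(\<Sum>i<n. x$i * cnj (x$i)) = 1" using sprod_conj_expand[OF x x] xx by simp
  have sy: "(\<Sum>i<n. y$i * cnj (y$i)) = 1" using sprod_conj_expand[OF y y] yy by simp
  have sxy: "(\<Sum>i<n. x$i * cnj (y$i)) = 1" using sprod_conj_expand[OF x y] xy by simp
  have syx: "(\<Sum>i<n. y$i * cnj (x$i)) = 1"
  proof -
    have "(\<Sum>i<n. y$i * cnj (x$i)) = cnj (\<Sum>i<n. x$i * cnj (y$i))" by (simp add: cnj_sum mult_ac)
    then show ?thesis using sxy by simp
  qed
  have "(\<Sum>i<n. (x$i - y$i) * cnj (x$i - y$i)) = (\<Sum>i<n. x$i * cnj (x$i)) - (\<Sum>i<n. x$i * cnj (y$i)) - (\<Sum>i<n. y$i * cnj (x$i)) + (\<Sum>i<n. y$i * cnj (y$i))"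
    by (simp add: sum_subtractf sum.distrib algebra_simps)
  also have "\<dots> = 0" using sx sy sxy syx by simp
  finally have s0: "(\<Sum>i<n. (x$i - y$i) * cnj (x$i - y$i)) = 0" .
  have "(\<Sum>i<n. (x$i - y$i) * cnj (x$i - y$i)) = (\<Sum>i<n. complex_of_real ((cmod (x$i - y$i))^2))"
    by (rule sum.cong, simp, rule complex_norm_square[symmetric])
  also have "\<dots> = complex_of_real (\<Sum>i<n. (cmod (x$i - y$i))^2)" by simp
  finally have "(\<Sum>i<n. (x$i - y$i) * cnj (x$i - y$i)) = complex_of_real (\<Sum>i<n. (cmod (x$i - y$i))^2)" .
  then have "complex_of_real (\<Sum>i<n. (cmod (x$i - y$i))^2) = 0" using s0 by (simp only:)
  then have "(\<Sum>i<n. (cmod (x$i - y$i))^2) = 0" by (simp only: of_real_eq_0_iff)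
  then have "\<forall>i\<in>{..<n}. (cmod (x$i - y$i))^2 = 0" by (subst sum_nonneg_eq_0_iff[symmetric]) auto
  then show ?thesis using x y by (intro eq_vecI) auto
qed

lemma ketbra_mult_vec:
  assumes y: "y \<in> carrier_vec n" and x: "x \<in> carrier_vec n"
  shows "ketbra y *\<^sub>v x = (x \<bullet>c y) \<cdot>\<^sub>v y"
proof (rule eq_vecI)
  fix p assume "p < dim_vec ((x \<bullet>c y) \<cdot>\<^sub>v y)"
  then have p: "p < n" using y by simp
  show "(ketbra y *\<^sub>v x) $ p = ((x \<bullet>c y) \<cdot>\<^sub>v y) $ p"
    using p x y unfolding ketbra_def
    by (simp add: scalar_prod_def atLeast0LessThan sum_distrib_left sum_distrib_right mult_ac sprod_conj_expand[OF x y])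
qed (use x y in \<open>auto simp: ketbra_def\<close>)

lemma ketbra_eq_phase:
  assumes x: "x \<in> carrier_vec n" and y: "y \<in> carrier_vec n"
    and xx: "x \<bullet>c x = 1" and eq: "ketbra x = ketbra y"
  shows "\<exists>c. cmod c = 1 \<and> x = c \<cdot>\<^sub>v y"
proof -
  have "x = (x \<bullet>c x) \<cdot>\<^sub>v x" using xx by simp
  also have "\<dots> = ketbra x *\<^sub>v x" using ketbra_mult_vec[OF x x] by simp
  also have "\<dots> = (x \<bullet>c y) \<cdot>\<^sub>v y" unfolding eq using ketbra_mult_vec[OF y x] .
  finally have xc: "x = (x \<bullet>c y) \<cdot>\<^sub>v y" .
  have tr: "(\<Sum>i<n. ketbra x $$ (i,i)) = (\<Sum>i<n. ketbra y $$ (i,i))" using eq by simp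
  have "y \<bullet>c y = 1"
    using tr xx x y unfolding ketbra_def by (simp add: sprod_conj_expand[of _ n])
  have "1 = x \<bullet>c x" using xx by simp
  also have "\<dots> = ((x \<bullet>c y) * cnj (x \<bullet>c y)) * (y \<bullet>c y)"
    apply (subst (1 2) xc) using sprod_conj_smult[OF y y] by simp
  finally have "(x \<bullet>c y) * cnj (x \<bullet>c y) = 1" using \<open>y \<bullet>c y = 1\<close> by simp
  then have "cmod (x \<bullet>c y) = 1"
    by (metis complex_norm_square norm_ge_zero of_real_eq_1_iff power2_eq_1_iff abs_of_nonneg real_sqrt_abs real_sqrt_one)
  then show ?thesis using xc by blast
qed

lemma ketbra_conj:
  assumes A: "A \<in> carrier_mat n n" and v: "v \<in> carrier_vec n"
  shows "A * ketbra v * adj A = ketbra (A *\<^sub>v v)"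
proof -
  have k: "ketbra u = mat n n (\<lambda>(p,q). \<Sum>j\<in>{()}. 1 * (u $ p * cnj (u $ q)))" if "u \<in> carrier_vec n" for u
    using that unfolding ketbra_def by (auto intro!: eq_matI)
  have "A * ketbra v * adj A = mat n n (\<lambda>(p,q). \<Sum>j\<in>{()}. 1 * ((A *\<^sub>v v) $ p * cnj ((A *\<^sub>v v) $ q)))"
    unfolding k[OF v] by (rule conj_ketsum[OF A]) (use v in auto)
  also have "\<dots> = ketbra (A *\<^sub>v v)" using A v by (subst k[of "A *\<^sub>v v"]) auto
  finally show ?thesis .
qed




lemma pur_carrier: "proj_unitary_rep G n U \<Longrightarrow> g \<in> carrier G \<Longrightarrow> U g \<in> carrier_mat n n"
  unfolding proj_unitary_rep_def unitary_mat_def by auto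

lemma pur_unitary: "proj_unitary_rep G n U \<Longrightarrow> g \<in> carrier G \<Longrightarrow> adj (U g) * U g = 1\<^sub>m n"
  unfolding proj_unitary_rep_def unitary_mat_def by auto

lemma pur_unitary': 
  assumes "proj_unitary_rep G n U" "g \<in> carrier G"
  shows "U g * adj (U g) = 1\<^sub>m n"
  using mat_mult_left_right_inverse[OF adj_carrier[OF pur_carrier[OF assms]] pur_carrier[OF assms] pur_unitary[OF assms]] .

lemma pur_sprod:
  assumes "proj_unitary_rep G n U" "g \<in> carrier G" "x \<in> carrier_vec n" "y \<in> carrier_vec n"
  shows "(U g *\<^sub>v x) \<bullet>c (U g *\<^sub>v y) = x \<bullet>c y"
  by (rule unitary_sprod[OF pur_carrier[OF assms(1,2)] pur_unitary[OF assms(1,2)] assms(3,4)])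

lemma pur_cancel:
  assumes "proj_unitary_rep G n U" "g \<in> carrier G" "x \<in> carrier_vec n"
  shows "adj (U g) *\<^sub>v (U g *\<^sub>v x) = x"
proof -
  have "adj (U g) *\<^sub>v (U g *\<^sub>v x) = (adj (U g) * U g) *\<^sub>v x"
    by (rule assoc_mult_mat_vec[symmetric, of _ n n _ n]) (use assms pur_carrier[OF assms(1,2)] in auto)
  then show ?thesis using pur_unitary[OF assms(1,2)] assms(3) by simp
qed

lemma pur_phase:
  assumes grp: "group G" and pU: "proj_unitary_rep G n U" and g: "g \<in> carrier G" and g': "g' \<in> carrier G" and x: "x \<in> carrier_vec n"
  shows "\<exists>e. cmod e = 1 \<and> U g *\<^sub>v (U g' *\<^sub>v x) = e \<cdot>\<^sub>v (U (g \<otimes>\<^bsub>G\<^esub> g') *\<^sub>v x)"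
proof -
  obtain \<omega> :: "_ \<Rightarrow> _ \<Rightarrow> real" where om: "\<forall>g\<in>carrier G. \<forall>g'\<in>carrier G.
        U g * U g' = exp (\<i> * complex_of_real (\<omega> g g')) \<cdot>\<^sub>m U (g \<otimes>\<^bsub>G\<^esub> g')"
    using pU unfolding proj_unitary_rep_def by blast
  have "U g *\<^sub>v (U g' *\<^sub>v x) = (U g * U g') *\<^sub>v x"
    by (rule assoc_mult_mat_vec[symmetric, of _ n n _ n]) (use pur_carrier[OF pU g] pur_carrier[OF pU g'] x in auto)
  also have "\<dots> = (exp (\<i> * complex_of_real (\<omega> g g')) \<cdot>\<^sub>m U (g \<otimes>\<^bsub>G\<^esub> g')) *\<^sub>v x" using om g g' by simp
  also have "\<dots> = exp (\<i> * complex_of_real (\<omega> g g')) \<cdot>\<^sub>v (U (g \<otimes>\<^bsub>G\<^esub> g') *\<^sub>v x)"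
  proof (rule smult_mat_mult_vec[OF _ x])
    interpret group G by (rule grp)
    have "g \<otimes>\<^bsub>G\<^esub> g' \<in> carrier G" using g g' by simp
    then show "U (g \<otimes>\<^bsub>G\<^esub> g') \<in> carrier_mat n n" by (rule pur_carrier[OF pU])
  qed
  finally show ?thesis using cmod_exp_i by blast
qed

lemma pur_adj_phase:
  assumes grp: "group G" and pU: "proj_unitary_rep G n U" and h: "h \<in> carrier G" and g: "g \<in> carrier G" and x: "x \<in> carrier_vec n"
  shows "\<exists>e. cmod e = 1 \<and> adj (U h) *\<^sub>v (U g *\<^sub>v x) = e \<cdot>\<^sub>v (U (inv\<^bsub>G\<^esub> h \<otimes>\<^bsub>G\<^esub> g) *\<^sub>v x)"
proof -
  interpret group G by (rule grp)
  define k where "k = inv\<^bsub>G\<^esub> h \<otimes>\<^bsub>G\<^esub> g"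
  have k: "k \<in> carrier G" unfolding k_def using h g by simp
  have hk: "h \<otimes>\<^bsub>G\<^esub> k = g" unfolding k_def using h g by (simp add: m_assoc[symmetric])
  obtain e where e: "cmod e = 1" "U h *\<^sub>v (U k *\<^sub>v x) = e \<cdot>\<^sub>v (U g *\<^sub>v x)"
    using pur_phase[OF grp pU h k x] hk by auto
  have e0: "e \<noteq> 0" using e(1) by auto
  have Ukx: "U k *\<^sub>v x \<in> carrier_vec n" using pur_carrier[OF pU k] x by simp
  have "U g *\<^sub>v x = inverse e \<cdot>\<^sub>v (e \<cdot>\<^sub>v (U g *\<^sub>v x))" using e0 by (simp add: smult_smult_assoc)
  also have "\<dots> = inverse e \<cdot>\<^sub>v (U h *\<^sub>v (U k *\<^sub>v x))" using e(2) by simp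
  finally have "adj (U h) *\<^sub>v (U g *\<^sub>v x) = adj (U h) *\<^sub>v (inverse e \<cdot>\<^sub>v (U h *\<^sub>v (U k *\<^sub>v x)))" by simp
  also have "\<dots> = inverse e \<cdot>\<^sub>v (adj (U h) *\<^sub>v (U h *\<^sub>v (U k *\<^sub>v x)))"
    by (rule mult_mat_vec[of _ n n]) (use pur_carrier[OF pU h] Ukx in auto)
  also have "\<dots> = inverse e \<cdot>\<^sub>v (U k *\<^sub>v x)" using pur_cancel[OF pU h Ukx] by simp
  finally show ?thesis unfolding k_def using e(1) by (intro exI[of _ "inverse e"]) (simp add: norm_inverse)
qed




lemma sprod_conj_smult_left:
  fixes x y :: "complex vec"
  assumes x: "x \<in> carrier_vec n" and y: "y \<in> carrier_vec n"
  shows "(a \<cdot>\<^sub>v x) \<bullet>c y = a * (x \<bullet>c y)"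
proof -
  have x': "a \<cdot>\<^sub>v x \<in> carrier_vec n" using x by auto
  show ?thesis unfolding sprod_conj_expand[OF x' y] sprod_conj_expand[OF x y]
    using x y by (simp add: sum_distrib_left mult_ac)
qed

lemma sum_if_const:
  assumes "finite A"
  shows "(\<Sum>x\<in>A. if P x then a else 0) = of_nat (card {x\<in>A. P x}) * (a::complex)"
proof -
  have "(\<Sum>x\<in>A. if P x then a else 0) = (\<Sum>x\<in>{x\<in>A. P x}. a)"
    using sum.inter_filter[OF assms, of "\<lambda>_. a" P] by simp
  also have "\<dots> = of_nat (card {x\<in>A. P x}) * a" by (rule sum_constant)
  finally show ?thesis .
qed

locale qset =
  fixes G :: "('g, 'b) monoid_scheme" and H :: "'g set"
    and d d' :: nat and U U' :: "'g \<Rightarrow> complex mat" and \<xi> \<phi> :: "complex vec"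
  assumes grp: "group G" and fin: "finite (carrier G)" and sub: "subgroup H G"
    and pU: "proj_unitary_rep G d U" and pxi: "pure_state d \<xi>"
    and chi1: "\<forall>g\<in>H. char_fun U \<xi> g = 1"
    and chi0: "\<forall>g\<in>carrier G - H. char_fun U \<xi> g = 0"
    and pU': "proj_unitary_rep G d' U'" and pphi: "pure_state d' \<phi>"
    and sym: "H \<subseteq> Sym G U' \<phi>"
begin

lemma xi_c: "\<xi> \<in> carrier_vec d" and xi_n: "\<xi> \<bullet>c \<xi> = 1"
  using pxi unfolding pure_state_def by auto

lemma phi_c: "\<phi> \<in> carrier_vec d'" and phi_n: "\<phi> \<bullet>c \<phi> = 1"
  using pphi unfolding pure_state_def by auto

lemma pos_of_unit: "(v::complex vec) \<in> carrier_vec n \<Longrightarrow> v \<bullet>c v = 1 \<Longrightarrow> 0 < n"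
  by (rule ccontr) (auto simp: sprod_conj_expand[of v n v])

lemma d_pos: "0 < d" using pos_of_unit[OF xi_c xi_n] .
lemma d'_pos: "0 < d'" using pos_of_unit[OF phi_c phi_n] .

lemma H_sub: "H \<subseteq> carrier G" using sub by (rule subgroup.subset)
lemma H_fin: "finite H" using finite_subset[OF H_sub fin] .
lemma H_one: "\<one>\<^bsub>G\<^esub> \<in> H" using sub by (rule subgroup.one_closed)
lemma H_card: "0 < card H" using H_fin H_one card_gt_0_iff by blast
lemma G_card: "0 < card (carrier G)" using fin H_one H_sub card_gt_0_iff by blast

lemma Uc: "g \<in> carrier G \<Longrightarrow> U g \<in> carrier_mat d d" by (rule pur_carrier[OF pU])
lemma U'c: "g \<in> carrier G \<Longrightarrow> U' g \<in> carrier_mat d' d'" by (rule pur_carrier[OF pU'])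

definition psi where "psi g = U g *\<^sub>v \<xi>"

lemma psi_c: "g \<in> carrier G \<Longrightarrow> psi g \<in> carrier_vec d"
  unfolding psi_def by (rule mult_mat_vec_carrier[OF Uc xi_c])

lemma psi_n: "g \<in> carrier G \<Longrightarrow> psi g \<bullet>c psi g = 1"
  unfolding psi_def using pur_sprod[OF pU _ xi_c xi_c] xi_n by simp

lemma UH_fix: "h \<in> H \<Longrightarrow> U h *\<^sub>v \<xi> = \<xi>"
proof -
  assume h: "h \<in> H"
  then have hG: "h \<in> carrier G" using H_sub by auto
  show ?thesis
  proof (rule unit_eq[OF _ xi_c])
    show "U h *\<^sub>v \<xi> \<in> carrier_vec d" using psi_c[OF hG] unfolding psi_def .
    show "(U h *\<^sub>v \<xi>) \<bullet>c (U h *\<^sub>v \<xi>) = 1" using psi_n[OF hG] unfolding psi_def .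
    show "\<xi> \<bullet>c \<xi> = 1" by (rule xi_n)
    show "(U h *\<^sub>v \<xi>) \<bullet>c \<xi> = 1" using chi1 h unfolding char_fun_def by auto
  qed
qed

lemma key:
  assumes g: "g \<in> carrier G" and g': "g' \<in> carrier G" and s': "s' < d"
  shows "psi g $ s * (psi g' \<bullet>c psi g) * cnj (psi g' $ s')
       = (if inv\<^bsub>G\<^esub> g \<otimes>\<^bsub>G\<^esub> g' \<in> H then psi g $ s * cnj (psi g $ s') else 0)"
proof -
  interpret group G by (rule grp)
  define h where "h = inv\<^bsub>G\<^esub> g \<otimes>\<^bsub>G\<^esub> g'"
  have hG: "h \<in> carrier G" unfolding h_def using g g' by simp
  have gh: "g \<otimes>\<^bsub>G\<^esub> h = g'" unfolding h_def using g g' by (simp add: m_assoc[symmetric])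
  obtain e where e: "cmod e = 1" "U g *\<^sub>v (U h *\<^sub>v \<xi>) = e \<cdot>\<^sub>v (U g' *\<^sub>v \<xi>)"
    using pur_phase[OF grp pU g hG xi_c] gh by auto
  have e0: "e \<noteq> 0" using e(1) by auto
  have ee: "inverse e * cnj (inverse e) = 1"
  proof -
    have "cmod (inverse e) = 1" using e(1) by (simp add: norm_inverse)
    then show ?thesis using complex_norm_square[of "inverse e"] by simp
  qed
  have psig': "psi g' = inverse e \<cdot>\<^sub>v (U g *\<^sub>v (U h *\<^sub>v \<xi>))"
    unfolding psi_def e(2) using e0 by (simp add: smult_smult_assoc)
  have Uhx: "U h *\<^sub>v \<xi> \<in> carrier_vec d" using Uc[OF hG] xi_c by simp
  have UgUh: "U g *\<^sub>v (U h *\<^sub>v \<xi>) \<in> carrier_vec d" using Uc[OF g] Uhx by simp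
  show ?thesis
  proof (cases "h \<in> H")
    case True
    then have p: "psi g' = inverse e \<cdot>\<^sub>v psi g" using psig' UH_fix[OF True] unfolding psi_def by simp
    have "psi g' \<bullet>c psi g = inverse e" unfolding p
      using sprod_conj_smult_left[OF psi_c[OF g] psi_c[OF g]] psi_n[OF g] by simp
    moreover have "cnj (psi g' $ s') = cnj (inverse e) * cnj (psi g $ s')"
      unfolding p using s' psi_c[OF g] by simp
    ultimately have "psi g $ s * (psi g' \<bullet>c psi g) * cnj (psi g' $ s') = (inverse e * cnj (inverse e)) * (psi g $ s * cnj (psi g $ s'))"
      by (simp add: mult_ac)
    then have r: "psi g $ s * (psi g' \<bullet>c psi g) * cnj (psi g' $ s') = psi g $ s * cnj (psi g $ s')"
      by (simp only: ee mult_1_left)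
    have T: "inv\<^bsub>G\<^esub> g \<otimes>\<^bsub>G\<^esub> g' \<in> H" using True unfolding h_def .
    show ?thesis by (simp only: if_P[OF T] r)
  next
    case False
    then have "char_fun U \<xi> h = 0" using chi0 hG by auto
    then have z: "(U h *\<^sub>v \<xi>) \<bullet>c \<xi> = 0" unfolding char_fun_def .
    have "psi g' \<bullet>c psi g = inverse e * ((U g *\<^sub>v (U h *\<^sub>v \<xi>)) \<bullet>c (U g *\<^sub>v \<xi>))"
      unfolding psig' using sprod_conj_smult_left[OF UgUh psi_c[OF g]] unfolding psi_def .
    also have "\<dots> = 0" using pur_sprod[OF pU g Uhx xi_c] z by simp
    finally show ?thesis using False unfolding h_def by simp
  qed
qed


definition kH :: complex where "kH = complex_of_real (1 / real (card H))"

definition P where "P = mat d d (\<lambda>(s,s'). \<Sum>g\<in>carrier G. kH * (psi g $ s * cnj (psi g $ s')))"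

lemma P_c: "P \<in> carrier_mat d d" unfolding P_def by simp

lemma card_coset:
  assumes g: "g \<in> carrier G"
  shows "card {g'\<in>carrier G. inv\<^bsub>G\<^esub> g \<otimes>\<^bsub>G\<^esub> g' \<in> H} = card H"
proof -
  interpret group G by (rule grp)
  have "bij_betw (\<lambda>h. g \<otimes>\<^bsub>G\<^esub> h) H {g'\<in>carrier G. inv\<^bsub>G\<^esub> g \<otimes>\<^bsub>G\<^esub> g' \<in> H}"
  proof (rule bij_betwI[where g="\<lambda>g'. inv\<^bsub>G\<^esub> g \<otimes>\<^bsub>G\<^esub> g'"])
    show "(\<lambda>h. g \<otimes>\<^bsub>G\<^esub> h) \<in> H \<rightarrow> {g'\<in>carrier G. inv\<^bsub>G\<^esub> g \<otimes>\<^bsub>G\<^esub> g' \<in> H}"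
      using g H_sub by (auto simp: m_assoc[symmetric])
    show "(\<lambda>g'. inv\<^bsub>G\<^esub> g \<otimes>\<^bsub>G\<^esub> g') \<in> {g'\<in>carrier G. inv\<^bsub>G\<^esub> g \<otimes>\<^bsub>G\<^esub> g' \<in> H} \<rightarrow> H"
      by auto
    show "inv\<^bsub>G\<^esub> g \<otimes>\<^bsub>G\<^esub> (g \<otimes>\<^bsub>G\<^esub> x) = x" if "x \<in> H" for x
      using that g H_sub by (auto simp: m_assoc[symmetric])
    show "g \<otimes>\<^bsub>G\<^esub> (inv\<^bsub>G\<^esub> g \<otimes>\<^bsub>G\<^esub> y) = y" if "y \<in> {g'\<in>carrier G. inv\<^bsub>G\<^esub> g \<otimes>\<^bsub>G\<^esub> g' \<in> H}" for y
      using that g by (auto simp: m_assoc[symmetric])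
  qed
  then show ?thesis by (simp add: bij_betw_same_card)
qed

lemma kH_card: "kH * kH * of_nat (card H) = kH"
  unfolding kH_def using H_card by (simp add: field_simps)

lemma PP: "P * P = P"
proof (rule eq_matI)
  fix s s' assume "s < dim_row P" "s' < dim_col P"
  then have s: "s < d" and s': "s' < d" unfolding P_def by auto
  have "(P * P) $$ (s,s') = (\<Sum>r<d. (\<Sum>g\<in>carrier G. kH * (psi g $ s * cnj (psi g $ r))) * (\<Sum>g'\<in>carrier G. kH * (psi g' $ r * cnj (psi g' $ s'))))"
    using s s' unfolding P_def by (simp add: scalar_prod_def atLeast0LessThan row_def col_def)
  also have "\<dots> = (\<Sum>r<d. \<Sum>g\<in>carrier G. \<Sum>g'\<in>carrier G. kH * kH * (psi g $ s * (psi g' $ r * cnj (psi g $ r)) * cnj (psi g' $ s')))"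
    by (rule sum.cong, simp) (subst sum_product, simp add: mult_ac)
  also have "\<dots> = (\<Sum>g\<in>carrier G. \<Sum>r<d. \<Sum>g'\<in>carrier G. kH * kH * (psi g $ s * (psi g' $ r * cnj (psi g $ r)) * cnj (psi g' $ s')))"
    by (rule sum.swap)
  also have "\<dots> = (\<Sum>g\<in>carrier G. \<Sum>g'\<in>carrier G. \<Sum>r<d. kH * kH * (psi g $ s * (psi g' $ r * cnj (psi g $ r)) * cnj (psi g' $ s')))"
    by (rule sum.cong, simp, rule sum.swap)
  also have "\<dots> = (\<Sum>g\<in>carrier G. \<Sum>g'\<in>carrier G. kH * kH * (psi g $ s * (psi g' \<bullet>c psi g) * cnj (psi g' $ s')))"
  proof (rule sum.cong, simp, rule sum.cong, simp)
    fix g g' assume g: "g \<in> carrier G" and g': "g' \<in> carrier G"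
    show "(\<Sum>r<d. kH * kH * (psi g $ s * (psi g' $ r * cnj (psi g $ r)) * cnj (psi g' $ s'))) = kH * kH * (psi g $ s * (psi g' \<bullet>c psi g) * cnj (psi g' $ s'))"
      unfolding sprod_conj_expand[OF psi_c[OF g'] psi_c[OF g]]
      by (simp add: sum_distrib_left sum_distrib_right mult_ac)
  qed
  also have "\<dots> = (\<Sum>g\<in>carrier G. \<Sum>g'\<in>carrier G. if inv\<^bsub>G\<^esub> g \<otimes>\<^bsub>G\<^esub> g' \<in> H then kH * kH * (psi g $ s * cnj (psi g $ s')) else 0)"
    by (rule sum.cong, simp, rule sum.cong, simp) (simp add: key[OF _ _ s'])
  also have "\<dots> = (\<Sum>g\<in>carrier G. kH * (psi g $ s * cnj (psi g $ s')))"
  proof (rule sum.cong, simp)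
    fix g assume g: "g \<in> carrier G"
    have "(\<Sum>g'\<in>carrier G. if inv\<^bsub>G\<^esub> g \<otimes>\<^bsub>G\<^esub> g' \<in> H then kH * kH * (psi g $ s * cnj (psi g $ s')) else 0)
        = of_nat (card H) * (kH * kH * (psi g $ s * cnj (psi g $ s')))"
      using sum_if_const[OF fin] card_coset[OF g] by simp
    also have "\<dots> = (kH * kH * of_nat (card H)) * (psi g $ s * cnj (psi g $ s'))" by (simp add: mult_ac)
    also have "\<dots> = kH * (psi g $ s * cnj (psi g $ s'))" by (simp only: kH_card)
    finally show "(\<Sum>g'\<in>carrier G. if inv\<^bsub>G\<^esub> g \<otimes>\<^bsub>G\<^esub> g' \<in> H then kH * kH * (psi g $ s * cnj (psi g $ s')) else 0) = kH * (psi g $ s * cnj (psi g $ s'))" .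
  qed
  also have "\<dots> = P $$ (s,s')" unfolding P_def using s s' by simp
  finally show "(P * P) $$ (s,s') = P $$ (s,s')" .
qed (auto simp: P_def)

end



definition tr2 :: "nat \<Rightarrow> complex mat \<Rightarrow> complex mat \<Rightarrow> complex" where
  "tr2 n X R = (\<Sum>s<n. \<Sum>s'<n. X$$(s,s') * R$$(s',s))"

lemma tr2_ketsum:
  assumes X: "X \<in> carrier_mat n n" and b: "\<And>j. j \<in> J \<Longrightarrow> b j \<in> carrier_vec n"
  shows "tr2 n X (mat n n (\<lambda>(p,q). \<Sum>j\<in>J. c j * (b j $ p * cnj (b j $ q)))) = (\<Sum>j\<in>J. c j * qf (b j) X)"
proof -
  have "tr2 n X (mat n n (\<lambda>(p,q). \<Sum>j\<in>J. c j * (b j $ p * cnj (b j $ q))))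
      = (\<Sum>s<n. \<Sum>s'<n. \<Sum>j\<in>J. c j * (X$$(s,s') * b j $ s' * cnj (b j $ s)))"
    unfolding tr2_def by (rule sum.cong, simp, rule sum.cong, simp) (simp add: sum_distrib_left mult_ac)
  also have "\<dots> = (\<Sum>s<n. \<Sum>j\<in>J. \<Sum>s'<n. c j * (X$$(s,s') * b j $ s' * cnj (b j $ s)))"
    by (rule sum.cong, simp, rule sum.swap)
  also have "\<dots> = (\<Sum>j\<in>J. \<Sum>s<n. \<Sum>s'<n. c j * (X$$(s,s') * b j $ s' * cnj (b j $ s)))"
    by (rule sum.swap)
  also have "\<dots> = (\<Sum>j\<in>J. c j * qf (b j) X)"
    by (rule sum.cong, simp) (simp add: qf_expand[OF X b] sum_distrib_left)
  finally show ?thesis .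
qed

lemma tr2_ketbra:
  assumes X: "X \<in> carrier_mat n n" and a: "a \<in> carrier_vec n"
  shows "tr2 n X (ketbra a) = qf a X"
  unfolding tr2_def qf_expand[OF X a] using a unfolding ketbra_def
  by (intro sum.cong refl) (simp add: mult_ac)

lemma tr2_one:
  assumes X: "X \<in> carrier_mat n n"
  shows "tr2 n X (1\<^sub>m n) = mtrace X"
proof -
  have "tr2 n X (1\<^sub>m n) = (\<Sum>s<n. \<Sum>s'<n. if s' = s then X$$(s,s') else 0)"
    unfolding tr2_def by (rule sum.cong, simp, rule sum.cong, simp) simp
  also have "\<dots> = (\<Sum>s<n. X$$(s,s))" by simp
  finally show ?thesis unfolding mtrace_def using X by simp
qed

lemma tr2_minus:
  assumes "R \<in> carrier_mat n n" "S \<in> carrier_mat n n"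
  shows "tr2 n X (R - S) = tr2 n X R - tr2 n X S"
  unfolding tr2_def using assms by (simp add: sum_subtractf algebra_simps)

lemma cols_tr2:
  assumes B: "B \<in> carrier_mat n n" and X: "X \<in> carrier_mat n n"
  shows "(\<Sum>r<n. qf (col B r) X) = tr2 n X (B * adj B)"
proof -
  have "(\<Sum>r<n. qf (col B r) X) = (\<Sum>r<n. \<Sum>s<n. \<Sum>s'<n. X$$(s,s') * (B$$(s',r) * cnj (B$$(s,r))))"
    by (rule sum.cong, simp) (use B in \<open>simp add: qf_expand[OF X] mult_ac\<close>)
  also have "\<dots> = (\<Sum>s<n. \<Sum>r<n. \<Sum>s'<n. X$$(s,s') * (B$$(s',r) * cnj (B$$(s,r))))"
    by (rule sum.swap)
  also have "\<dots> = (\<Sum>s<n. \<Sum>s'<n. \<Sum>r<n. X$$(s,s') * (B$$(s',r) * cnj (B$$(s,r))))"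
    by (rule sum.cong, simp, rule sum.swap)
  also have "\<dots> = tr2 n X (B * adj B)"
    unfolding tr2_def using B
    by (intro sum.cong refl) (simp add: scalar_prod_def atLeast0LessThan row_def col_def sum_distrib_left)
  finally show ?thesis .
qed

lemma adj_mult:
  assumes A: "A \<in> carrier_mat n k" and B: "B \<in> carrier_mat k m"
  shows "adj (A * B) = adj B * adj A"
  by (rule eq_matI) (use A B in \<open>auto simp: scalar_prod_def atLeast0LessThan row_def col_def cnj_sum mult_ac\<close>)

lemma bij_left_mult1:
  assumes grp: "group G" and h: "h \<in> carrier G"
  shows "bij_betw (\<lambda>g. h \<otimes>\<^bsub>G\<^esub> g) (carrier G) (carrier G)"
proof -
  interpret group G by (rule grp)
  show ?thesis
  proof (rule bij_betwI[where g="\<lambda>g. inv\<^bsub>G\<^esub> h \<otimes>\<^bsub>G\<^esub> g"])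
    show "(\<lambda>g. h \<otimes>\<^bsub>G\<^esub> g) \<in> carrier G \<rightarrow> carrier G" using h by auto
    show "(\<lambda>g. inv\<^bsub>G\<^esub> h \<otimes>\<^bsub>G\<^esub> g) \<in> carrier G \<rightarrow> carrier G" using h by auto
    show "inv\<^bsub>G\<^esub> h \<otimes>\<^bsub>G\<^esub> (h \<otimes>\<^bsub>G\<^esub> x) = x" if "x \<in> carrier G" for x
      using that h by (auto simp: m_assoc[symmetric])
    show "h \<otimes>\<^bsub>G\<^esub> (inv\<^bsub>G\<^esub> h \<otimes>\<^bsub>G\<^esub> y) = y" if "y \<in> carrier G" for y
      using that h by (auto simp: m_assoc[symmetric])
  qed
qed

context qset begin

lemma cnj_kH[simp]: "cnj kH = kH" unfolding kH_def by simp

lemma P_herm: "adj P = P"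
  by (rule eq_matI) (auto simp: P_def cnj_sum mult_ac)

definition Q where "Q = 1\<^sub>m d - P"

lemma Q_c: "Q \<in> carrier_mat d d" unfolding Q_def by (rule minus_carrier_mat[OF P_c])

lemma Q_herm: "adj Q = Q"
proof (rule eq_matI)
  fix i j assume "i < dim_row Q" "j < dim_col Q"
  then have i: "i < d" and j: "j < d" using Q_c by auto
  have "P $$ (i,j) = cnj (P $$ (j,i))" using P_herm i j P_c by (metis adj_index carrier_matD(1,2))
  then show "adj Q $$ (i,j) = Q $$ (i,j)" using i j P_c unfolding Q_def by auto
qed (use Q_c in auto)

lemma QQ: "Q * Q = Q"
proof -
  have one: "1\<^sub>m d \<in> carrier_mat d d" by simp
  have "Q * Q = 1\<^sub>m d * Q - P * Q"
    unfolding Q_def by (rule minus_mult_distrib_mat[OF one P_c]) (rule Q_c[unfolded Q_def])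
  also have "P * Q = P * 1\<^sub>m d - P * P"
    unfolding Q_def by (rule mult_minus_distrib_mat[OF P_c one P_c])
  also have "\<dots> = P - P" using P_c PP by simp
  finally have e: "Q * Q = 1\<^sub>m d * Q - (P - P)" .
  show ?thesis
    by (rule eq_matI) (use Q_c P_c in \<open>auto simp: e\<close>)
qed

lemma P_inv:
  assumes g: "g \<in> carrier G"
  shows "U g * P * adj (U g) = P"
proof -
  interpret group G by (rule grp)
  have "U g * P * adj (U g) = mat d d (\<lambda>(s,s'). \<Sum>h\<in>carrier G. kH * ((U g *\<^sub>v psi h) $ s * cnj ((U g *\<^sub>v psi h) $ s')))"
    unfolding P_def by (rule conj_ketsum[OF Uc[OF g]]) (rule psi_c)
  also have "\<dots> = mat d d (\<lambda>(s,s'). \<Sum>h\<in>carrier G. kH * (psi (g \<otimes>\<^bsub>G\<^esub> h) $ s * cnj (psi (g \<otimes>\<^bsub>G\<^esub> h) $ s')))"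
  proof -
    have f: "(U g *\<^sub>v psi h) $ s * cnj ((U g *\<^sub>v psi h) $ s') = psi (g \<otimes>\<^bsub>G\<^esub> h) $ s * cnj (psi (g \<otimes>\<^bsub>G\<^esub> h) $ s')"
      if s: "s < d" and s': "s' < d" and h: "h \<in> carrier G" for s s' h
    proof -
      obtain e where e: "cmod e = 1" "U g *\<^sub>v (U h *\<^sub>v \<xi>) = e \<cdot>\<^sub>v (U (g \<otimes>\<^bsub>G\<^esub> h) *\<^sub>v \<xi>)"
        using pur_phase[OF grp pU g h xi_c] by blast
      have gh: "g \<otimes>\<^bsub>G\<^esub> h \<in> carrier G" using g h by simp
      have ph: "(e \<cdot>\<^sub>v psi (g \<otimes>\<^bsub>G\<^esub> h)) $ s * cnj ((e \<cdot>\<^sub>v psi (g \<otimes>\<^bsub>G\<^esub> h)) $ s') = psi (g \<otimes>\<^bsub>G\<^esub> h) $ s * cnj (psi (g \<otimes>\<^bsub>G\<^esub> h) $ s')"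
        by (rule phase_ket[OF e(1)]) (use psi_c[OF gh] s s' in auto)
      show ?thesis using ph e(2) unfolding psi_def by simp
    qed
    show ?thesis by (rule eq_matI) (auto intro!: sum.cong simp: f)
  qed
  also have "\<dots> = P"
  proof -
    have r: "(\<Sum>h\<in>carrier G. kH * (psi (g \<otimes>\<^bsub>G\<^esub> h) $ s * cnj (psi (g \<otimes>\<^bsub>G\<^esub> h) $ s'))) = (\<Sum>h\<in>carrier G. kH * (psi h $ s * cnj (psi h $ s')))" for s s'
      by (rule sum.reindex_bij_betw[OF bij_left_mult1[OF grp g], where g="\<lambda>h. kH * (psi h $ s * cnj (psi h $ s'))"])
    show ?thesis unfolding P_def by (rule eq_matI) (simp_all only: r index_mat dim_row_mat dim_col_mat split) 
  qed
  finally show ?thesis .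
qed

lemma Q_inv:
  assumes g: "g \<in> carrier G"
  shows "U g * Q * adj (U g) = Q"
proof -
  have Ug: "U g \<in> carrier_mat d d" by (rule Uc[OF g])
  have one: "1\<^sub>m d \<in> carrier_mat d d" by simp
  have "U g * Q = U g * 1\<^sub>m d - U g * P"
    unfolding Q_def by (rule mult_minus_distrib_mat[OF Ug one P_c])
  then have "U g * Q * adj (U g) = (U g - U g * P) * adj (U g)" using Ug by simp
  also have "\<dots> = U g * adj (U g) - U g * P * adj (U g)"
    by (rule minus_mult_distrib_mat) (use Ug P_c in auto)
  also have "\<dots> = Q" unfolding P_inv[OF g] pur_unitary'[OF pU g] Q_def ..
  finally show ?thesis .
qed

end



lemma sprod_conj_sym:
  assumes x: "x \<in> carrier_vec n" and y: "y \<in> carrier_vec n"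
  shows "x \<bullet>c y = cnj (y \<bullet>c x)"
  unfolding sprod_conj_expand[OF x y] sprod_conj_expand[OF y x] by (simp add: cnj_sum mult_ac)

lemma qf_ketbra:
  assumes a: "a \<in> carrier_vec n" and x: "x \<in> carrier_vec n"
  shows "qf a (ketbra x) = (a \<bullet>c x) * cnj (a \<bullet>c x)"
proof -
  have "qf a (ketbra x) = ((a \<bullet>c x) \<cdot>\<^sub>v x) \<bullet>c a" unfolding qf_def ketbra_mult_vec[OF x a] ..
  also have "\<dots> = (a \<bullet>c x) * (x \<bullet>c a)" by (rule sprod_conj_smult_left[OF x a])
  finally show ?thesis using sprod_conj_sym[OF x a] by simp
qed

context qset begin

definition cH :: complex where "cH = complex_of_real (sqrt (1 / real (card H)))"
definition cG :: complex where "cG = complex_of_real (sqrt (1 / real (card (carrier G))))"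
definition kG :: complex where "kG = complex_of_real (1 / real (card (carrier G)))"

definition alpha where "alpha t = (if t = d then cH \<cdot>\<^sub>v \<xi> else cG \<cdot>\<^sub>v col Q t)"

definition V where "V M g = kron_pow (U' g) M"
definition w where "w M = vpow \<phi> M"

definition Lam where "Lam M = chan (d'^M) (carrier G \<times> {..<Suc d}) (\<lambda>(g,t). U g *\<^sub>v alpha t) (\<lambda>(g,t). V M g *\<^sub>v w M)"

lemma alpha_c: "alpha t \<in> carrier_vec d"
  unfolding alpha_def using xi_c Q_c by (auto intro!: carrier_vecI)

lemma V_c: "g \<in> carrier G \<Longrightarrow> V M g \<in> carrier_mat (d'^M) (d'^M)"
  unfolding V_def by (rule kron_pow_carrier[OF U'c])

lemma w_c: "w M \<in> carrier_vec (d'^M)" unfolding w_def by (rule vpow_carrier[OF phi_c])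

lemma Vw: "g \<in> carrier G \<Longrightarrow> V M g *\<^sub>v w M = vpow (U' g *\<^sub>v \<phi>) M"
  unfolding V_def w_def by (rule kron_pow_vpow[OF U'c phi_c d'_pos])

lemma Vw_c: "g \<in> carrier G \<Longrightarrow> V M g *\<^sub>v w M \<in> carrier_vec (d'^M)"
  by (rule mult_mat_vec_carrier[OF V_c w_c])

lemma Vw_n: "g \<in> carrier G \<Longrightarrow> (V M g *\<^sub>v w M) \<bullet>c (V M g *\<^sub>v w M) = 1"
  unfolding Vw
  by (rule vpow_norm) (use pur_sprod[OF pU' _ phi_c phi_c] phi_n U'c phi_c d'_pos in auto)

lemma V_phase:
  assumes h: "h \<in> carrier G" and g: "g \<in> carrier G"
  shows "\<exists>e. cmod e = 1 \<and> V M h *\<^sub>v (V M g *\<^sub>v w M) = e \<cdot>\<^sub>v (V M (h \<otimes>\<^bsub>G\<^esub> g) *\<^sub>v w M)"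
proof -
  interpret group G by (rule grp)
  have hg: "h \<otimes>\<^bsub>G\<^esub> g \<in> carrier G" using h g by simp
  have y: "U' g *\<^sub>v \<phi> \<in> carrier_vec d'" using U'c[OF g] phi_c by simp
  obtain e where e: "cmod e = 1" "U' h *\<^sub>v (U' g *\<^sub>v \<phi>) = e \<cdot>\<^sub>v (U' (h \<otimes>\<^bsub>G\<^esub> g) *\<^sub>v \<phi>)"
    using pur_phase[OF grp pU' h g phi_c] by blast
  have "V M h *\<^sub>v (V M g *\<^sub>v w M) = vpow (U' h *\<^sub>v (U' g *\<^sub>v \<phi>)) M"
    unfolding Vw[OF g] unfolding V_def by (rule kron_pow_vpow[OF U'c[OF h] y d'_pos])
  also have "\<dots> = e^M \<cdot>\<^sub>v (V M (h \<otimes>\<^bsub>G\<^esub> g) *\<^sub>v w M)" unfolding e(2) vpow_smult Vw[OF hg] ..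
  finally show ?thesis using e(1) by (intro exI[of _ "e^M"]) (simp add: norm_power)
qed

lemma V_H:
  assumes h: "h \<in> H" and p: "p < d'^M" and q: "q < d'^M"
  shows "(V M h *\<^sub>v w M) $ p * cnj ((V M h *\<^sub>v w M) $ q) = w M $ p * cnj (w M $ q)"
proof -
  have hG: "h \<in> carrier G" using h H_sub by auto
  have "U' h * ketbra \<phi> * adj (U' h) = ketbra \<phi>" using sym h unfolding Sym_def by auto
  then have "ketbra \<phi> = ketbra (U' h *\<^sub>v \<phi>)" using ketbra_conj[OF U'c[OF hG] phi_c] by simp
  then obtain c where c: "cmod c = 1" "\<phi> = c \<cdot>\<^sub>v (U' h *\<^sub>v \<phi>)"
    using ketbra_eq_phase[OF phi_c _ phi_n] U'c[OF hG] phi_c by (metis mult_mat_vec_carrier)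
  have "w M = c^M \<cdot>\<^sub>v (V M h *\<^sub>v w M)"
    unfolding Vw[OF hG] unfolding w_def by (subst c(2)) (rule vpow_smult)
  then have "w M $ p * cnj (w M $ q) = (c^M \<cdot>\<^sub>v (V M h *\<^sub>v w M)) $ p * cnj ((c^M \<cdot>\<^sub>v (V M h *\<^sub>v w M)) $ q)" by simp
  also have "\<dots> = (V M h *\<^sub>v w M) $ p * cnj ((V M h *\<^sub>v w M) $ q)"
    by (rule phase_ket) (use c(1) V_c[OF hG, of M] p q in \<open>auto simp: norm_power\<close>)
  finally show ?thesis by simp
qed


lemma cH_sq: "complex_of_real ((cmod cH)^2) = kH"
  unfolding cH_def kH_def by simp

lemma cG_sq: "complex_of_real ((cmod cG)^2) = kG"
  unfolding cG_def kG_def by simp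

lemma UQ_adj: "g \<in> carrier G \<Longrightarrow> (U g * Q) * adj (U g * Q) = Q"
proof -
  assume g: "g \<in> carrier G"
  have Ug: "U g \<in> carrier_mat d d" by (rule Uc[OF g])
  have aUg: "adj (U g) \<in> carrier_mat d d" using Ug by simp
  have "adj (U g * Q) = Q * adj (U g)" using adj_mult[OF Ug Q_c] Q_herm by simp
  then have "(U g * Q) * adj (U g * Q) = (U g * Q) * (Q * adj (U g))" by simp
  also have "\<dots> = U g * (Q * (Q * adj (U g)))"
    by (rule assoc_mult_mat[OF Ug Q_c mult_carrier_mat[OF Q_c aUg]])
  also have "Q * (Q * adj (U g)) = (Q * Q) * adj (U g)"
    by (rule assoc_mult_mat[symmetric, OF Q_c Q_c aUg])
  also have "U g * (Q * Q * adj (U g)) = U g * Q * adj (U g)"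
    unfolding QQ by (rule assoc_mult_mat[symmetric, OF Ug Q_c aUg])
  also have "\<dots> = Q" by (rule Q_inv[OF g])
  finally show ?thesis .
qed

lemma coef:
  assumes g: "g \<in> carrier G" and X: "X \<in> carrier_mat d d"
  shows "(\<Sum>t<Suc d. qf (U g *\<^sub>v alpha t) X) = kH * qf (psi g) X + kG * tr2 d X Q"
proof -
  have Ug: "U g \<in> carrier_mat d d" by (rule Uc[OF g])
  have "qf (U g *\<^sub>v alpha d) X = kH * qf (psi g) X"
  proof -
    have "U g *\<^sub>v alpha d = cH \<cdot>\<^sub>v psi g" unfolding alpha_def psi_def
      using mult_mat_vec[OF Ug xi_c] by simp
    then show ?thesis using qf_smult[OF X psi_c[OF g]] cH_sq by simp
  qed
  moreover have "(\<Sum>t<d. qf (U g *\<^sub>v alpha t) X) = kG * tr2 d X Q"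
  proof -
    have "(\<Sum>t<d. qf (U g *\<^sub>v alpha t) X) = (\<Sum>t<d. kG * qf (col (U g * Q) t) X)"
    proof (rule sum.cong, simp)
      fix t assume "t \<in> {..<d}"
      then have t: "t < d" by simp
      have cQ: "col Q t \<in> carrier_vec d" using Q_c by (auto intro!: carrier_vecI)
      have "U g *\<^sub>v alpha t = cG \<cdot>\<^sub>v col (U g * Q) t"
        unfolding alpha_def using t mult_mat_vec[OF Ug cQ] col_mult2[OF Ug Q_c t] by simp
      moreover have "col (U g * Q) t \<in> carrier_vec d" using Ug Q_c by (auto intro!: carrier_vecI)
      ultimately show "qf (U g *\<^sub>v alpha t) X = kG * qf (col (U g * Q) t) X"
        using qf_smult[OF X] cG_sq by simp
    qed
    also have "\<dots> = kG * tr2 d X ((U g * Q) * adj (U g * Q))"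
      by (simp add: sum_distrib_left[symmetric] cols_tr2[OF mult_carrier_mat[OF Ug Q_c] X])
    finally show ?thesis unfolding UQ_adj[OF g] .
  qed
  ultimately show ?thesis by simp
qed

lemma sumP:
  assumes X: "X \<in> carrier_mat d d"
  shows "(\<Sum>g\<in>carrier G. kH * qf (psi g) X) = tr2 d X P"
  unfolding P_def by (rule tr2_ketsum[OF X psi_c, symmetric])

lemma kG_card: "of_nat (card (carrier G)) * kG = 1"
  unfolding kG_def using G_card by simp

lemma total:
  assumes X: "X \<in> carrier_mat d d"
  shows "(\<Sum>j\<in>carrier G \<times> {..<Suc d}. qf ((\<lambda>(g,t). U g *\<^sub>v alpha t) j) X) = mtrace X"
proof -
  have "(\<Sum>j\<in>carrier G \<times> {..<Suc d}. qf ((\<lambda>(g,t). U g *\<^sub>v alpha t) j) X)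
      = (\<Sum>g\<in>carrier G. \<Sum>t<Suc d. qf (U g *\<^sub>v alpha t) X)"
    unfolding sum.cartesian_product by (rule sum.cong) auto
  also have "\<dots> = (\<Sum>g\<in>carrier G. kH * qf (psi g) X + kG * tr2 d X Q)"
    by (rule sum.cong, simp) (rule coef[OF _ X])
  also have "\<dots> = tr2 d X P + of_nat (card (carrier G)) * kG * tr2 d X Q"
    by (simp add: sum.distrib sumP[OF X])
  also have "\<dots> = tr2 d X P + tr2 d X Q" by (simp add: kG_card)
  also have "\<dots> = tr2 d X (1\<^sub>m d)" unfolding Q_def tr2_minus[OF one_carrier_mat P_c] by simp
  also have "\<dots> = mtrace X" by (rule tr2_one[OF X])
  finally show ?thesis .
qed


lemma kH_card': "kH * of_nat (card H) = 1"
  unfolding kH_def using H_card by simp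

lemma chi_sum: "(\<Sum>g\<in>carrier G. char_fun U \<xi> g * cnj (char_fun U \<xi> g)) = of_nat (card H)"
proof -
  have "(\<Sum>g\<in>carrier G. char_fun U \<xi> g * cnj (char_fun U \<xi> g)) = (\<Sum>g\<in>carrier G. if g \<in> H then 1 else 0)"
    by (rule sum.cong) (use chi1 chi0 in auto)
  also have "\<dots> = of_nat (card {g\<in>carrier G. g \<in> H}) * 1" by (rule sum_if_const[OF fin])
  also have "{g\<in>carrier G. g \<in> H} = H" using H_sub by auto
  finally show ?thesis by simp
qed

lemma kxi_c: "ketbra \<xi> \<in> carrier_mat d d" unfolding ketbra_def using xi_c by auto

lemma qf_psi_xi: "g \<in> carrier G \<Longrightarrow> qf (psi g) (ketbra \<xi>) = char_fun U \<xi> g * cnj (char_fun U \<xi> g)"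
  using qf_ketbra[OF psi_c xi_c] unfolding char_fun_def psi_def by simp

lemma trQ_xi: "tr2 d (ketbra \<xi>) Q = 0"
proof -
  have "tr2 d (ketbra \<xi>) Q = tr2 d (ketbra \<xi>) (1\<^sub>m d) - tr2 d (ketbra \<xi>) P"
    unfolding Q_def by (rule tr2_minus[OF one_carrier_mat P_c])
  also have "tr2 d (ketbra \<xi>) (1\<^sub>m d) = 1"
  proof -
    have "tr2 d (ketbra \<xi>) (1\<^sub>m d) = mtrace (ketbra \<xi>)" by (rule tr2_one[OF kxi_c])
    also have "\<dots> = (\<Sum>i<d. \<xi> $ i * cnj (\<xi> $ i))" unfolding mtrace_def ketbra_def using xi_c by simp
    also have "\<dots> = 1" using sprod_conj_expand[OF xi_c xi_c] xi_n by simp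
    finally show ?thesis .
  qed
  also have "tr2 d (ketbra \<xi>) P = (\<Sum>g\<in>carrier G. kH * qf (psi g) (ketbra \<xi>))" by (rule sumP[OF kxi_c, symmetric])
  also have "\<dots> = kH * (\<Sum>g\<in>carrier G. char_fun U \<xi> g * cnj (char_fun U \<xi> g))"
    by (simp add: sum_distrib_left qf_psi_xi)
  also have "\<dots> = 1" unfolding chi_sum by (rule kH_card')
  finally show ?thesis by simp
qed

lemma dim_w: "dim_vec (w M) = d'^M" unfolding w_def using phi_c by simp

lemma Lam_xi: "Lam M (ketbra \<xi>) = kron_pow (ketbra \<phi>) M"
proof -
  have kp: "kron_pow (ketbra \<phi>) M = ketbra (w M)" unfolding w_def
    by (rule ketbra_vpow[symmetric]) (use phi_c d'_pos in auto)
  show ?thesis unfolding kp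
  proof (rule eq_matI)
    fix p q assume "p < dim_row (ketbra (w M))" "q < dim_col (ketbra (w M))"
    moreover have dw: "dim_vec (w M) = d'^M" unfolding w_def using phi_c by simp
    ultimately have p: "p < d'^M" and q: "q < d'^M" unfolding ketbra_def by auto
    have "Lam M (ketbra \<xi>) $$ (p,q) = (\<Sum>j\<in>carrier G \<times> {..<Suc d}. qf ((\<lambda>(g,t). U g *\<^sub>v alpha t) j) (ketbra \<xi>) * (((\<lambda>(g,t). V M g *\<^sub>v w M) j) $ p * cnj (((\<lambda>(g,t). V M g *\<^sub>v w M) j) $ q)))"
      unfolding Lam_def chan_def using p q by simp
    also have "\<dots> = (\<Sum>g\<in>carrier G. \<Sum>t<Suc d. qf (U g *\<^sub>v alpha t) (ketbra \<xi>) * ((V M g *\<^sub>v w M) $ p * cnj ((V M g *\<^sub>v w M) $ q)))"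
      unfolding sum.cartesian_product by (rule sum.cong) auto
    also have "\<dots> = (\<Sum>g\<in>carrier G. (\<Sum>t<Suc d. qf (U g *\<^sub>v alpha t) (ketbra \<xi>)) * ((V M g *\<^sub>v w M) $ p * cnj ((V M g *\<^sub>v w M) $ q)))"
      by (rule sum.cong, simp, rule sum_distrib_right[symmetric])
    also have "\<dots> = (\<Sum>g\<in>carrier G. if g \<in> H then kH * (w M $ p * cnj (w M $ q)) else 0)"
    proof (rule sum.cong, simp)
      fix g assume g: "g \<in> carrier G"
      have c: "(\<Sum>t<Suc d. qf (U g *\<^sub>v alpha t) (ketbra \<xi>)) = kH * (char_fun U \<xi> g * cnj (char_fun U \<xi> g))"
        using coef[OF g kxi_c] trQ_xi qf_psi_xi[OF g] by simp
      show "(\<Sum>t<Suc d. qf (U g *\<^sub>v alpha t) (ketbra \<xi>)) * ((V M g *\<^sub>v w M) $ p * cnj ((V M g *\<^sub>v w M) $ q))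
          = (if g \<in> H then kH * (w M $ p * cnj (w M $ q)) else 0)"
      proof (cases "g \<in> H")
        case True
        then show ?thesis unfolding c using chi1 V_H[OF True p q] by simp
      next
        case False
        then show ?thesis unfolding c using chi0 g by simp
      qed
    qed
    also have "\<dots> = of_nat (card H) * (kH * (w M $ p * cnj (w M $ q)))"
    proof -
      have "{g\<in>carrier G. g \<in> H} = H" using H_sub by auto
      then show ?thesis using sum_if_const[OF fin, of "\<lambda>g. g \<in> H" "kH * (w M $ p * cnj (w M $ q))"] by simp
    qed
    also have "\<dots> = w M $ p * cnj (w M $ q)"
      using kH_card' by (simp add: mult.assoc[symmetric] mult.commute[of "of_nat (card H)"])
    also have "\<dots> = ketbra (w M) $$ (p,q)" unfolding ketbra_def using p q dw by simp
    finally show "Lam M (ketbra \<xi>) $$ (p,q) = ketbra (w M) $$ (p,q)" .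
  qed (simp_all add: Lam_def chan_def ketbra_def dim_w)
qed

lemma a_c: "j \<in> carrier G \<times> {..<Suc d} \<Longrightarrow> (\<lambda>(g,t). U g *\<^sub>v alpha t) j \<in> carrier_vec d"
  using Uc alpha_c by (auto intro!: mult_mat_vec_carrier)

lemma b_c: "j \<in> carrier G \<times> {..<Suc d} \<Longrightarrow> (\<lambda>(g,t). V M g *\<^sub>v w M) j \<in> carrier_vec (d'^M) \<and> (\<lambda>(g,t). V M g *\<^sub>v w M) j \<bullet>c (\<lambda>(g,t). V M g *\<^sub>v w M) j = 1"
  using Vw_c Vw_n by auto

lemma main: "\<exists>\<Lambda>. CPTP d (d' ^ M) \<Lambda> \<and> covariant G d U (\<lambda>g. kron_pow (U' g) M) \<Lambda> \<and> \<Lambda> (ketbra \<xi>) = kron_pow (ketbra \<phi>) M"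
proof (intro exI conjI)
  show "CPTP d (d' ^ M) (Lam M)"
    unfolding CPTP_def
  proof (intro conjI)
    show "linear_map d (d' ^ M) (Lam M)" unfolding Lam_def by (rule chan_linear) (rule a_c)
    show "completely_positive d (d' ^ M) (Lam M)" unfolding Lam_def
      by (rule chan_cp) (use fin a_c b_c d_pos d'_pos in auto)
    show "trace_preserving d (Lam M)" unfolding trace_preserving_def
    proof
      fix X :: "complex mat" assume X: "X \<in> carrier_mat d d"
      show "mtrace (Lam M X) = mtrace X" unfolding Lam_def
        using chan_trace[where J="carrier G \<times> {..<Suc d}" and b="\<lambda>(g,t). V M g *\<^sub>v w M" and m="d'^M", OF b_c] total[OF X] by simp
    qed
  qed
  show "covariant G d U (\<lambda>g. kron_pow (U' g) M) (Lam M)"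
    unfolding covariant_def
  proof (intro ballI)
    fix h and X :: "complex mat" assume h: "h \<in> carrier G" and X: "X \<in> carrier_mat d d"
    show "kron_pow (U' h) M * Lam M X * adj (kron_pow (U' h) M) = Lam M (U h * X * adj (U h))"
      unfolding Lam_def V_def[symmetric]
      by (rule chan_cov[OF grp h Uc V_c alpha_c w_c X])
         (use pur_adj_phase[OF grp pU h _ alpha_c] V_phase[OF h] in auto)
  qed
  show "Lam M (ketbra \<xi>) = kron_pow (ketbra \<phi>) M" by (rule Lam_xi)
qed

end


theorem mainTheorem7:
  fixes G :: "('g, 'b) monoid_scheme" and H :: "'g set"
    and d d' :: nat and U U' :: "'g \<Rightarrow> complex mat" and \<xi> \<phi> :: "complex vec"
  assumes "group G" and "finite (carrier G)" and "subgroup H G"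
    and "proj_unitary_rep G d U" and "pure_state d \<xi>"
    and "\<forall>g\<in>H. char_fun U \<xi> g = 1"
    and "\<forall>g\<in>carrier G - H. char_fun U \<xi> g = 0"
    and "proj_unitary_rep G d' U'" and "pure_state d' \<phi>"
    and "H \<subseteq> Sym G U' \<phi>"
  shows "\<forall>M::nat. M > 0 \<longrightarrow>
    (\<exists>\<Lambda>. CPTP d (d' ^ M) \<Lambda>
        \<and> covariant G d U (\<lambda>g. kron_pow (U' g) M) \<Lambda>
        \<and> \<Lambda> (ketbra \<xi>) = kron_pow (ketbra \<phi>) M)"
proof (intro allI impI)
  fix M :: nat assume "M > 0"
  have q: "qset G H d d' U U' \<xi> \<phi>" using assms unfolding qset_def by blast
  show "\<exists>\<Lambda>. CPTP d (d' ^ M) \<Lambda> \<and> covariant G d U (\<lambda>g. kron_pow (U' g) M) \<Lambda> \<and> \<Lambda> (ketbra \<xi>) = kron_pow (ketbra \<phi>) M"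
    by (rule qset.main[OF q])
qed

end
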